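(* Consider the semi-discrete finite volume scheme $$\frac{d}{dt}\mathbf U_{i,j}=-\frac{\mathcal F_{i+\frac12,j}-\mathcal F_{i-\frac12,j}}{\Delta x}-\frac{\mathcal G_{i,j+\frac12}-\mathcal G_{i,j-\frac12}}{\Delta y}+\mathbf S_{i,j}$$ for the stochastic Galerkin shallow water system with time-independent bottom, with the energy conservative fluxes $\mathcal F=\mathcal F^{EC}$, $\mathcal G=\mathcal G^{EC}$ and source $\mathbf S_{i,j}$ defined in the context. Then this scheme is well-balanced, energy conservative, and has local truncation error $\mathcal O(\Delta x^2+\Delta y^2)$.
   Context: Let $\mathcal M_k\in\mathbb R^{K\times K}$, $(\mathcal M_k)_{l,m}=\int\phi_k\phi_l\phi_m\rho$, where $\phi_1\equiv1,\dots,\phi_K$ are polynomials orthonormal with respect to a probability density $\rho$ on $\mathbb R^d$ with all moments finite; $\mathcal P(\widehat z)=\sum_k\widehat z_k\mathcal M_k$ for $\widehat z\in\mathbb R^K$; $g>0$. The SG shallow water system is $\widehat U_t+\widehat F(\widehat U)_x+\widehat G(\widehat U)_y=\widehat S(\widehat U)$, $\widehat U=(\widehat h,\widehat{q^x},\widehat{q^y})\in\mathbb R^{3K}$, with $\widehat F=\big(\widehat{q^x};\ \mathcal P(\widehat{q^x})\mathcal P^{-1}(\widehat h)\widehat{q^x}+\tfrac12 g\mathcal P(\widehat h)\widehat h;\ \mathcal P(\widehat{q^x})\mathcal P^{-1}(\widehat h)\widehat{q^y}\big)$, $\widehat G=\big(\widehat{q^y};\ \mathcal P(\widehat{q^y})\mathcal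 P^{-1}(\widehat h)\widehat{q^x};\ \mathcal P(\widehat{q^y})\mathcal P^{-1}(\widehat h)\widehat{q^y}+\tfrac12 g\mathcal P(\widehat h)\widehat h\big)$, $\widehat S=\big(0;-g\mathcal P(\widehat h)\widehat B_x;-g\mathcal P(\widehat h)\widehat B_y\big)$, bottom $\widehat B(x,y)\in\mathbb R^K$ time independent. Discretization: uniform rectangular cells with sizes $\Delta x,\Delta y$, centers $(x_i,y_j)$; $\mathbf U_{i,j}(t)=(\mathbf h_{i,j},\mathbf q^x_{i,j},\mathbf q^y_{i,j})$ approximates the cell average of $\widehat U$, $\mathbf B_{i,j}$ that of $\widehat B$; $\mathcal P(\mathbf h_{i,j})$ is assumed positive definite; $\mathbf u_{i,j}=\mathcal P^{-1}(\mathbf h_{i,j})\mathbf q^x_{i,j}$, $\mathbf v_{i,j}=\mathcal P^{-1}(\mathbf h_{i,j})\mathbf q^y_{i,j}$. For any cell quantity $\mathbf a$: $\overline{\mathbf a}_{i+\frac12,j}=\tfrac12(\mathbf a_{i,j}+\mathbf a_{i+1,j})$, $[\![\mathbf a]\!]_{i+\frac12,j}=\mathbf a_{i+1,j}-\mathbf a_{i,j}$, and analogously $\overline{\mathbf a}_{i,j+\frac12}$, $[\![\mathbf a]\!]_{i,j+\frac12}$ in $j$; $\overline{\mathcal P(\mathbf h)\mathbf h}$ denotes the average of $\mathcal P(\mathbf h_{i,j})\mathbf h_{i,j}$. EC fluxes and source (all averages at the indicated interface): $\mathcal F^{EC}_{i+\frac12,j}=\big(\mathcal P(\overline{\mathbf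 h})\overline{\mathbf u};\ \tfrac12 g\,\overline{\mathcal P(\mathbf h)\mathbf h}+\mathcal P(\overline{\mathbf u})\mathcal P(\overline{\mathbf h})\overline{\mathbf u};\ \mathcal P(\overline{\mathbf v})\mathcal P(\overline{\mathbf h})\overline{\mathbf u}\big)_{i+\frac12,j}$, $\mathcal G^{EC}_{i,j+\frac12}=\big(\mathcal P(\overline{\mathbf h})\overline{\mathbf v};\ \mathcal P(\overline{\mathbf u})\mathcal P(\overline{\mathbf h})\overline{\mathbf v};\ \tfrac12 g\,\overline{\mathcal P(\mathbf h)\mathbf h}+\mathcal P(\overline{\mathbf v})\mathcal P(\overline{\mathbf h})\overline{\mathbf v}\big)_{i,j+\frac12}$, $\mathbf S_{i,j}=\Big(0;\ -\tfrac{g}{2\Delta x}\big(\mathcal P(\overline{\mathbf h}_{i+\frac12,j})[\![\mathbf B]\!]_{i+\frac12,j}+\mathcal P(\overline{\mathbf h}_{i-\frac12,j})[\![\mathbf B]\!]_{i-\frac12,j}\big);\ -\tfrac{g}{2\Delta y}\big(\mathcal P(\overline{\mathbf h}_{i,j+\frac12})[\![\mathbf B]\!]_{i,j+\frac12}+\mathcal P(\overline{\mathbf h}_{i,j-\frac12})[\![\mathbf B]\!]_{i,j-\frac12}\big)\Big)$. Discrete energy: $\mathbf E_{i,j}=\tfrac12\big((\mathbf q^x_{i,j})^\top\mathbf u_{i,j}+(\mathbf q^y_{i,j})^\top\mathbf v_{i,j}\big)+\tfrac12 g\|\mathbf h_{i,j}\|^2+g\mathbf h_{i,j}^\top\mathbf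 B_{i,j}$. Well-balanced: whenever $\mathbf q^x_{i,j}=\mathbf q^y_{i,j}=0$ and $\mathbf h_{i,j}+\mathbf B_{i,j}=\mathbf C$ (the same vector) for all $i,j$, the scheme gives $\frac{d}{dt}\mathbf U_{i,j}=0$ for all $i,j$. Energy conservative: there exist interface quantities $\mathcal H_{i+\frac12,j},\mathcal K_{i,j+\frac12}$ (numerical energy fluxes) such that along the scheme $\frac{d}{dt}\mathbf E_{i,j}=-\frac{\mathcal H_{i+\frac12,j}-\mathcal H_{i-\frac12,j}}{\Delta x}-\frac{\mathcal K_{i,j+\frac12}-\mathcal K_{i,j-\frac12}}{\Delta y}$ for all $i,j$. Local truncation error $\mathcal O(\Delta x^p+\Delta y^p)$: for smooth $\widehat U,\widehat B$ (with $\mathcal P(\widehat h)$ positive definite) inserted as cell values, the right-hand side of the scheme equals $\big(-\widehat F(\widehat U)_x-\widehat G(\widehat U)_y+\widehat S(\widehat U)\big)(x_i,y_j)+\mathcal O(\Delta x^p+\Delta y^p)$. *)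

theory Defs
  imports "HOL-Analysis.Analysis"
begin

definition poly_fun :: "(real^'d \<Rightarrow> real) \<Rightarrow> bool" where
  "poly_fun f \<longleftrightarrow> (\<exists>(A::('d \<Rightarrow> nat) set) c. finite A \<and>
      (\<forall>x. f x = (\<Sum>\<alpha>\<in>A. c \<alpha> * (\<Prod>i\<in>UNIV. (x$i) ^ (\<alpha> i)))))"

definition prob_density_all_moments :: "(real^'d \<Rightarrow> real) \<Rightarrow> bool" where
  "prob_density_all_moments \<rho> \<longleftrightarrow>
     \<rho> \<in> borel_measurable lborel \<and> (\<forall>x. 0 \<le> \<rho> x) \<and>
     integrable lborel \<rho> \<and> (LINT x|lborel. \<rho> x) = 1 \<and>
     (\<forall>\<alpha>::'d \<Rightarrow> nat. integrable lborel (\<lambda>x. (\<Prod>i\<in>UNIV. (x$i) ^ (\<alpha> i)) * \<rho> x))"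

text \<open>phi indexed by the finite type 'k (so K = CARD('k)); k1 is the index with phi k1 = 1.\<close>
definition sg_basis :: "(real^'d \<Rightarrow> real) \<Rightarrow> ('k::finite \<Rightarrow> real^'d \<Rightarrow> real) \<Rightarrow> 'k \<Rightarrow> bool" where
  "sg_basis \<rho> \<phi> k1 \<longleftrightarrow> prob_density_all_moments \<rho> \<and> (\<forall>k. poly_fun (\<phi> k)) \<and>
     \<phi> k1 = (\<lambda>_. 1) \<and>
     (\<forall>k l. (LINT x|lborel. \<phi> k x * \<phi> l x * \<rho> x) = (if k = l then 1 else 0))"

definition Mmat :: "(real^'d \<Rightarrow> real) \<Rightarrow> ('k::finite \<Rightarrow> real^'d \<Rightarrow> real) \<Rightarrow> 'k \<Rightarrow> real^'k^'k" where
  "Mmat \<rho> \<phi> k = (\<chi> l m. LINT x|lborel. \<phi> k x * \<phi> l x * \<phi> m x * \<rho> x)"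

definition Pop :: "(real^'d \<Rightarrow> real) \<Rightarrow> ('k::finite \<Rightarrow> real^'d \<Rightarrow> real) \<Rightarrow> real^'k \<Rightarrow> real^'k^'k" where
  "Pop \<rho> \<phi> z = (\<Sum>k\<in>UNIV. z$k *\<^sub>R Mmat \<rho> \<phi> k)"

definition pos_def :: "real^'k^'k \<Rightarrow> bool" where
  "pos_def A \<longleftrightarrow> transpose A = A \<and> (\<forall>x. x \<noteq> 0 \<longrightarrow> 0 < x \<bullet> (A *v x))"

text \<open>States (h, q^x, q^y). In the scheme definitions below, P stands for the operator
  z \<mapsto> P(z) (instantiated with Pop rho phi in the theorem).\<close>
type_synonym 'k st = "(real^'k) \<times> (real^'k) \<times> (real^'k)"

definition hh :: "'k st \<Rightarrow> real^'k" where "hh U = fst U"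
definition qx :: "'k st \<Rightarrow> real^'k" where "qx U = fst (snd U)"
definition qy :: "'k st \<Rightarrow> real^'k" where "qy U = snd (snd U)"

definition uvel :: "(real^'k \<Rightarrow> real^'k^'k) \<Rightarrow> 'k st \<Rightarrow> real^'k" where
  "uvel P U = matrix_inv (P (hh U)) *v qx U"
definition vvel :: "(real^'k \<Rightarrow> real^'k^'k) \<Rightarrow> 'k st \<Rightarrow> real^'k" where
  "vvel P U = matrix_inv (P (hh U)) *v qy U"

definition avg :: "'a::real_vector \<Rightarrow> 'a \<Rightarrow> 'a" where
  "avg a b = (1/2) *\<^sub>R (a + b)"

definition Fec :: "(real^'k \<Rightarrow> real^'k^'k) \<Rightarrow> real \<Rightarrow> 'k st \<Rightarrow> 'k st \<Rightarrow> 'k st" where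
  "Fec P g UL UR =
    (let hb = avg (hh UL) (hh UR); ub = avg (uvel P UL) (uvel P UR);
         vb = avg (vvel P UL) (vvel P UR);
         Phh = avg (P (hh UL) *v hh UL) (P (hh UR) *v hh UR)
     in (P hb *v ub,
         (g/2) *\<^sub>R Phh + P ub *v (P hb *v ub),
         P vb *v (P hb *v ub)))"

definition Gec :: "(real^'k \<Rightarrow> real^'k^'k) \<Rightarrow> real \<Rightarrow> 'k st \<Rightarrow> 'k st \<Rightarrow> 'k st" where
  "Gec P g UD UU =
    (let hb = avg (hh UD) (hh UU); ub = avg (uvel P UD) (uvel P UU);
         vb = avg (vvel P UD) (vvel P UU);
         Phh = avg (P (hh UD) *v hh UD) (P (hh UU) *v hh UU)
     in (P hb *v vb,
         P ub *v (P hb *v vb),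
         (g/2) *\<^sub>R Phh + P vb *v (P hb *v vb)))"

definition Ssrc :: "(real^'k \<Rightarrow> real^'k^'k) \<Rightarrow> real \<Rightarrow> real \<Rightarrow> real \<Rightarrow>
    (int \<Rightarrow> int \<Rightarrow> 'k st) \<Rightarrow> (int \<Rightarrow> int \<Rightarrow> real^'k) \<Rightarrow> int \<Rightarrow> int \<Rightarrow> 'k st" where
  "Ssrc P g dx dy U B i j =
    (0,
     - (g / (2*dx)) *\<^sub>R
        (P (avg (hh (U i j)) (hh (U (i+1) j))) *v (B (i+1) j - B i j)
       + P (avg (hh (U (i-1) j)) (hh (U i j))) *v (B i j - B (i-1) j)),
     - (g / (2*dy)) *\<^sub>R
        (P (avg (hh (U i j)) (hh (U i (j+1)))) *v (B i (j+1) - B i j)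
       + P (avg (hh (U i (j-1))) (hh (U i j))) *v (B i j - B i (j-1))))"

definition scheme_rhs :: "(real^'k \<Rightarrow> real^'k^'k) \<Rightarrow> real \<Rightarrow> real \<Rightarrow> real \<Rightarrow>
    (int \<Rightarrow> int \<Rightarrow> 'k st) \<Rightarrow> (int \<Rightarrow> int \<Rightarrow> real^'k) \<Rightarrow> int \<Rightarrow> int \<Rightarrow> 'k st" where
  "scheme_rhs P g dx dy U B i j =
      - (1/dx) *\<^sub>R (Fec P g (U i j) (U (i+1) j) - Fec P g (U (i-1) j) (U i j))
      - (1/dy) *\<^sub>R (Gec P g (U i j) (U i (j+1)) - Gec P g (U i (j-1)) (U i j))
      + Ssrc P g dx dy U B i j"

definition energy :: "(real^'k \<Rightarrow> real^'k^'k) \<Rightarrow> real \<Rightarrow> 'k st \<Rightarrow> real^'k \<Rightarrow> real" where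
  "energy P g U b = (1/2) * (qx U \<bullet> uvel P U + qy U \<bullet> vvel P U)
      + (1/2) * g * (norm (hh U))^2 + g * (hh U \<bullet> b)"

definition Fhat :: "(real^'k \<Rightarrow> real^'k^'k) \<Rightarrow> real \<Rightarrow> 'k st \<Rightarrow> 'k st" where
  "Fhat P g U = (qx U,
      P (qx U) *v (matrix_inv (P (hh U)) *v qx U) + (g/2) *\<^sub>R (P (hh U) *v hh U),
      P (qx U) *v (matrix_inv (P (hh U)) *v qy U))"

definition Ghat :: "(real^'k \<Rightarrow> real^'k^'k) \<Rightarrow> real \<Rightarrow> 'k st \<Rightarrow> 'k st" where
  "Ghat P g U = (qy U,
      P (qy U) *v (matrix_inv (P (hh U)) *v qx U),
      P (qy U) *v (matrix_inv (P (hh U)) *v qy U) + (g/2) *\<^sub>R (P (hh U) *v hh U))"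

definition Shat :: "(real^'k \<Rightarrow> real^'k^'k) \<Rightarrow> real \<Rightarrow> 'k st \<Rightarrow> real^'k \<Rightarrow> real^'k \<Rightarrow> 'k st" where
  "Shat P g U Bx By = (0, - g *\<^sub>R (P (hh U) *v Bx), - g *\<^sub>R (P (hh U) *v By))"

text \<open>C-infinity functions of two real variables: continuous, with partial derivatives in
  x and y existing everywhere and again C-infinity (all partial derivatives of all orders
  exist and are continuous).\<close>
coinductive smooth2 :: "(real \<Rightarrow> real \<Rightarrow> 'a::real_normed_vector) \<Rightarrow> bool" where
  "continuous_on UNIV (\<lambda>p. f (fst p) (snd p)) \<Longrightarrow>
   (\<And>x y. ((\<lambda>s. f s y) has_vector_derivative fx x y) (at x)) \<Longrightarrow>
   (\<And>x y. ((\<lambda>s. f x s) has_vector_derivative fy x y) (at y)) \<Longrightarrow>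
   smooth2 fx \<Longrightarrow> smooth2 fy \<Longrightarrow> smooth2 f"

definition pdx :: "(real \<Rightarrow> real \<Rightarrow> 'a::real_normed_vector) \<Rightarrow> real \<Rightarrow> real \<Rightarrow> 'a" where
  "pdx f x y = vector_derivative (\<lambda>s. f s y) (at x)"
definition pdy :: "(real \<Rightarrow> real \<Rightarrow> 'a::real_normed_vector) \<Rightarrow> real \<Rightarrow> real \<Rightarrow> 'a" where
  "pdy f x y = vector_derivative (\<lambda>s. f x s) (at y)"

end

theory Submission
  imports Defs
begin

definition TT :: "(real^'d \<Rightarrow> real) \<Rightarrow> ('k::finite \<Rightarrow> real^'d \<Rightarrow> real) \<Rightarrow> 'k \<Rightarrow> 'k \<Rightarrow> 'k \<Rightarrow> real" where
  "TT \<rho> \<phi> k l m = (LINT x|lborel. \<phi> k x * \<phi> l x * \<phi> m x * \<rho> x)"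

lemma TT_sym12: "TT \<rho> \<phi> k l m = TT \<rho> \<phi> l k m"
  unfolding TT_def by (simp add: mult.commute mult.left_commute)
lemma TT_sym13: "TT \<rho> \<phi> k l m = TT \<rho> \<phi> m l k"
  unfolding TT_def by (simp add: mult.commute mult.left_commute)
lemma TT_sym23: "TT \<rho> \<phi> k l m = TT \<rho> \<phi> k m l"
  unfolding TT_def by (simp add: mult.commute mult.left_commute)

lemma Pop_entry: "Pop \<rho> \<phi> z $ l $ m = (\<Sum>k\<in>UNIV. z$k * TT \<rho> \<phi> k l m)"
  by (simp add: Pop_def Mmat_def TT_def sum_component)

lemma Pop_add: "Pop \<rho> \<phi> (a + b) = Pop \<rho> \<phi> a + Pop \<rho> \<phi> b"
  by (simp add: vec_eq_iff Pop_entry sum.distrib algebra_simps)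
lemma Pop_scaleR: "Pop \<rho> \<phi> (c *\<^sub>R a) = c *\<^sub>R Pop \<rho> \<phi> a"
  by (simp add: vec_eq_iff Pop_entry sum_distrib_left algebra_simps)
lemma Pop_zero: "Pop \<rho> \<phi> 0 = 0"
  by (simp add: vec_eq_iff Pop_entry)
lemma Pop_minus: "Pop \<rho> \<phi> (- a) = - Pop \<rho> \<phi> a"
  by (simp add: vec_eq_iff Pop_entry sum_negf)
lemma Pop_diff: "Pop \<rho> \<phi> (a - b) = Pop \<rho> \<phi> a - Pop \<rho> \<phi> b"
  by (simp add: vec_eq_iff Pop_entry sum_subtractf algebra_simps)

lemma Pop_comm: "Pop \<rho> \<phi> a *v b = Pop \<rho> \<phi> b *v a"
proof -
  have "(\<Sum>m\<in>UNIV. (\<Sum>k\<in>UNIV. a$k * TT \<rho> \<phi> k l m) * b$m) = (\<Sum>m\<in>UNIV. (\<Sum>k\<in>UNIV. b$k * TT \<rho> \<phi> k l m) * a$m)" for l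
  proof -
    have "(\<Sum>m\<in>UNIV. (\<Sum>k\<in>UNIV. a$k * TT \<rho> \<phi> k l m) * b$m) = (\<Sum>m\<in>UNIV. \<Sum>k\<in>UNIV. a$k * TT \<rho> \<phi> k l m * b$m)"
      by (simp add: sum_distrib_right)
    also have "\<dots> = (\<Sum>k\<in>UNIV. \<Sum>m\<in>UNIV. a$k * TT \<rho> \<phi> k l m * b$m)" by (rule sum.swap)
    also have "\<dots> = (\<Sum>k\<in>UNIV. (\<Sum>m\<in>UNIV. b$m * TT \<rho> \<phi> m l k) * a$k)"
      by (simp add: sum_distrib_right sum_distrib_left TT_sym13[of \<rho> \<phi> _ l] mult.commute mult.left_commute)
    finally show ?thesis .
  qed
  then show ?thesis by (simp add: vec_eq_iff matrix_vector_mult_def Pop_entry)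
qed

lemma Pop_transpose: "transpose (Pop \<rho> \<phi> a) = Pop \<rho> \<phi> a"
  by (simp add: vec_eq_iff transpose_def Pop_entry TT_sym23)

lemma Pop_inner: "x \<bullet> (Pop \<rho> \<phi> a *v y) = (Pop \<rho> \<phi> a *v x) \<bullet> y"
  by (metis Pop_transpose dot_lmul_matrix vector_transpose_matrix)

lemma Pop_bilinear: "bilinear (\<lambda>a b. Pop \<rho> \<phi> a *v b)"
  unfolding bilinear_def
  by (simp add: linear_iff Pop_add Pop_scaleR matrix_vector_mult_add_rdistrib
      matrix_vector_right_distrib matrix_vector_mult_scaleR scaleR_matrix_vector_assoc)

lemma Pop_bb: "bounded_bilinear (\<lambda>a b. Pop \<rho> \<phi> a *v b)"
  using Pop_bilinear bilinear_conv_bounded_bilinear by blast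

lemma Pop_blin: "bounded_linear (Pop \<rho> \<phi>)"
  by (simp add: linear_conv_bounded_linear[symmetric] linear_iff Pop_add Pop_scaleR)


lemma Pop_avg_diff: "Pop \<rho> \<phi> ((1/2) *\<^sub>R (a + b)) *v (a - b) = (1/2) *\<^sub>R (Pop \<rho> \<phi> a *v a - Pop \<rho> \<phi> b *v b)"
proof -
  have "Pop \<rho> \<phi> ((1/2) *\<^sub>R (a + b)) *v (a - b) = (1/2) *\<^sub>R ((Pop \<rho> \<phi> a + Pop \<rho> \<phi> b) *v (a - b))"
    by (simp add: Pop_scaleR Pop_add scaleR_matrix_vector_assoc)
  also have "(Pop \<rho> \<phi> a + Pop \<rho> \<phi> b) *v (a - b) = Pop \<rho> \<phi> a *v a - Pop \<rho> \<phi> a *v b + (Pop \<rho> \<phi> b *v a - Pop \<rho> \<phi> b *v b)"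
    by (simp add: matrix_vector_mult_add_rdistrib matrix_vector_mult_diff_distrib)
  also have "\<dots> = Pop \<rho> \<phi> a *v a - Pop \<rho> \<phi> b *v b"
    by (simp add: Pop_comm[of \<rho> \<phi> b a])
  finally show ?thesis .
qed

lemma wb_aux:
  fixes a b c :: "'a::real_vector"
  shows "- ((1/dx) *\<^sub>R ((g/4) *\<^sub>R (a + b) - (g/4) *\<^sub>R (c + a))) - (g/(2*dx)) *\<^sub>R ((1/2) *\<^sub>R (a - b) + (1/2) *\<^sub>R (c - a)) = 0"
proof -
  have 1: "(1/dx) *\<^sub>R ((g/4) *\<^sub>R (a + b) - (g/4) *\<^sub>R (c + a)) = (g/(4*dx)) *\<^sub>R (b - c)"
    by (simp add: algebra_simps)
  have 2: "(g/(2*dx)) *\<^sub>R ((1/2) *\<^sub>R (a - b) + (1/2) *\<^sub>R (c - a)) = (g/(4*dx)) *\<^sub>R (c - b)"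
    by (simp add: algebra_simps)
  show ?thesis unfolding 1 2 by (simp add: algebra_simps)
qed

lemma wb:
  fixes U :: "int \<Rightarrow> int \<Rightarrow> 'k::finite st"
  assumes H: "\<forall>i j. qx (U i j) = 0 \<and> qy (U i j) = 0 \<and> hh (U i j) + B i j = C"
    and dx: "dx \<noteq> 0" and dy: "dy \<noteq> 0"
  shows "scheme_rhs (Pop \<rho> \<phi>) g dx dy U B i j = 0"
proof -
  have u0: "uvel (Pop \<rho> \<phi>) (U a b) = 0" "vvel (Pop \<rho> \<phi>) (U a b) = 0" for a b
    using H by (simp_all add: uvel_def vvel_def)
  have Bd': "B a b = C - hh (U a b)" for a b using H[rule_format, of a b] by (simp add: eq_diff_eq add.commute)
  have Bd: "B a b - B c d = hh (U c d) - hh (U a b)" for a b c d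
    by (simp add: Bd')
  show ?thesis
    unfolding scheme_rhs_def Fec_def Gec_def Ssrc_def Let_def avg_def u0 Bd
    by (simp add: Pop_zero Pop_avg_diff H wb_aux zero_prod_def)
qed


lemma minv:
  fixes A :: "real^'n^'n"
  assumes "invertible A"
  shows "A ** matrix_inv A = mat 1" "matrix_inv A ** A = mat 1"
proof -
  have "\<exists>A'. A ** A' = mat 1 \<and> A' ** A = mat 1" using assms by (simp add: invertible_def)
  then have "A ** matrix_inv A = mat 1 \<and> matrix_inv A ** A = mat 1"
    unfolding matrix_inv_def by (rule someI_ex)
  then show "A ** matrix_inv A = mat 1" "matrix_inv A ** A = mat 1" by auto
qed

lemma minv_vec:
  fixes A :: "real^'n^'n"
  assumes "invertible A"
  shows "A *v (matrix_inv A *v x) = x" "matrix_inv A *v (A *v x) = x"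
  by (simp_all add: matrix_vector_mul_assoc minv[OF assms])

lemma posdef_invertible:
  fixes A :: "real^'n^'n"
  assumes "pos_def A" shows "invertible A"
proof -
  have "\<forall>x. A *v x = 0 \<longrightarrow> x = 0" using assms unfolding pos_def_def by force
  then obtain B where B: "B ** A = mat 1" using matrix_left_invertible_ker by blast
  then show ?thesis using invertible_left_inverse by blast
qed

lemma vec_sum_axis: "(\<Sum>i\<in>UNIV. axis i (v $ i)) = (v :: 'b::real_normed_vector^'n)"
  by (simp add: vec_eq_iff sum_component axis_def if_distrib sum.delta cong: if_cong)

lemma hvd_vec:
  fixes f :: "real \<Rightarrow> 'b::euclidean_space^'n"
  assumes "\<And>i. ((\<lambda>s. f s $ i) has_vector_derivative D i) F"
  shows "(f has_vector_derivative (\<chi> i. D i)) F"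
proof -
  have bl: "bounded_linear (axis i :: 'b \<Rightarrow> 'b^'n)" for i
    unfolding linear_conv_bounded_linear[symmetric] linear_iff
    by (simp add: vec_eq_iff axis_def)
  have "((\<lambda>s. \<Sum>i\<in>UNIV. axis i (f s $ i)) has_vector_derivative (\<Sum>i\<in>UNIV. axis i (D i))) F"
    by (intro has_vector_derivative_sum bounded_linear.has_vector_derivative[OF bl] assms)
  moreover have "(\<Sum>i\<in>UNIV. axis i (D i)) = (\<chi> i. D i)"
    using vec_sum_axis[of "\<chi> i. D i"] by simp
  ultimately show ?thesis by (simp add: vec_sum_axis)
qed

lemma differentiable_vec:
  fixes f :: "real \<Rightarrow> 'b::euclidean_space^'n"
  assumes "\<And>i. (\<lambda>s. f s $ i) differentiable F"
  shows "f differentiable F"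
  using hvd_vec[of f "\<lambda>i. vector_derivative (\<lambda>s. f s $ i) F" F] assms
  by (metis differentiableI_vector vector_derivative_works)


lemma mm_bilinear: "bilinear (\<lambda>(A::real^'n^'m) (B::real^'p^'n). A ** B)"
  unfolding bilinear_def linear_iff
  by (simp add: vec_eq_iff matrix_matrix_mult_def sum.distrib algebra_simps sum_distrib_left)

lemma mm_bb: "bounded_bilinear (\<lambda>(A::real^'n^'m) (B::real^'p^'n). A ** B)"
  using mm_bilinear bilinear_conv_bounded_bilinear by blast

lemma mv_bilinear: "bilinear (\<lambda>(A::real^'n^'m) (x::real^'n). A *v x)"
  unfolding bilinear_def linear_iff
  by (simp add: vec_eq_iff matrix_vector_mult_def sum.distrib algebra_simps sum_distrib_left)

lemma mv_bb: "bounded_bilinear (\<lambda>(A::real^'n^'m) (x::real^'n). A *v x)"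
  using mv_bilinear bilinear_conv_bounded_bilinear by blast

lemma minv_cramer:
  fixes A :: "real^'n^'n"
  assumes "invertible A"
  shows "matrix_inv A $ i $ j = det (\<chi> r c. if c = i then axis j 1 $ r else A$r$c) / det A"
proof -
  let ?x = "matrix_inv A *v axis j 1"
  have d: "det A \<noteq> 0" using assms invertible_det_nz by blast
  have "A *v ?x = axis j 1" by (rule minv_vec[OF assms])
  then have "?x = (\<chi> k. det(\<chi> r c. if c=k then axis j 1 $ r else A$r$c) / det A)"
    using cramer[OF d] by blast
  then have "?x $ i = det (\<chi> r c. if c = i then axis j 1 $ r else A$r$c) / det A" by simp
  moreover have "?x $ i = matrix_inv A $ i $ j"
    by (simp add: matrix_vector_mult_def axis_def if_distrib sum.delta cong: if_cong)
  ultimately show ?thesis by simp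
qed

lemma minv_formula:
  fixes A :: "real^'n^'n"
  assumes "invertible A"
  shows "matrix_inv A = (\<chi> i j. det (\<chi> r c. if c = i then axis j 1 $ r else A$r$c) / det A)"
  using minv_cramer[OF assms] by (simp add: vec_eq_iff)

lemma differentiable_nth:
  fixes f :: "real \<Rightarrow> 'b::real_normed_vector^'n"
  assumes "f differentiable F"
  shows "(\<lambda>s. f s $ i) differentiable F"
  using bounded_linear.has_vector_derivative[OF bounded_linear_vec_nth, of f _ F i] assms
  by (metis differentiableI_vector vector_derivative_works)

lemma det_differentiable:
  fixes M :: "real \<Rightarrow> real^'n^'n"
  assumes "\<And>i j. (\<lambda>s. M s $ i $ j) differentiable (at t)"
  shows "(\<lambda>s. det (M s)) differentiable (at t)"
proof -
  have P: "(\<lambda>s. \<Prod>i\<in>UNIV. M s $ i $ p i) differentiable (at t)" for p :: "'n \<Rightarrow> 'n"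
  proof -
    have "\<forall>i. \<exists>D. ((\<lambda>s. M s $ i $ p i) has_derivative D) (at t)"
      using assms differentiable_def by blast
    then obtain D where "\<forall>i. ((\<lambda>s. M s $ i $ p i) has_derivative D i) (at t)" by metis
    then show ?thesis
      by (intro differentiableI[OF has_derivative_prod]) auto
  qed
  show ?thesis
    unfolding det_def
    by (intro differentiable_sum differentiable_mult differentiable_const) (use P finite_permutations in auto)
qed

lemma minv_differentiable:
  fixes M :: "real \<Rightarrow> real^'n^'n"
  assumes "M differentiable (at t)" and inv: "\<And>s. invertible (M s)"
  shows "(\<lambda>s. matrix_inv (M s)) differentiable (at t)"
proof -
  have e: "(\<lambda>s. matrix_inv (M s)) = (\<lambda>s. (\<chi> i j. det (\<chi> r c. if c = i then axis j 1 $ r else M s$r$c) / det (M s)))"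
    using minv_formula[OF inv] by auto
  have Me: "(\<lambda>s. M s $ i $ j) differentiable (at t)" for i j
    using differentiable_nth[OF differentiable_nth[OF assms(1)]] .
  have d: "det (M t) \<noteq> 0" using inv invertible_det_nz by blast
  have "(\<lambda>s. det (\<chi> r c. if c = i then axis j 1 $ r else M s$r$c) / det (M s)) differentiable (at t)" for i j
  proof (rule differentiable_divide)
    show "(\<lambda>s. det (\<chi> r c. if c = i then axis j 1 $ r else M s$r$c)) differentiable (at t)"
    proof (rule det_differentiable)
      fix a b show "(\<lambda>s. (\<chi> r c. if c = i then axis j 1 $ r else M s$r$c) $ a $ b) differentiable (at t)"
        by (cases "b = i") (auto intro: Me)
    qed
    show "(\<lambda>s. det (M s)) differentiable (at t)"
      by (rule det_differentiable) (auto intro: Me)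
  qed (rule d)
  then show ?thesis unfolding e
    by (intro differentiable_vec) auto
qed

lemma minv_hvd:
  fixes M :: "real \<Rightarrow> real^'n^'n"
  assumes "(M has_vector_derivative M') (at t)" and inv: "\<And>s. invertible (M s)"
  shows "((\<lambda>s. matrix_inv (M s)) has_vector_derivative - (matrix_inv (M t) ** M' ** matrix_inv (M t))) (at t)"
proof -
  let ?N = "\<lambda>s. matrix_inv (M s)"
  have "?N differentiable (at t)"
    using minv_differentiable assms differentiableI_vector by blast
  then obtain N' where N': "(?N has_vector_derivative N') (at t)"
    using vector_derivative_works by blast
  have "((\<lambda>s. ?N s ** M s) has_vector_derivative (?N t ** M' + N' ** M t)) (at t)"
    by (rule bounded_bilinear.has_vector_derivative[OF mm_bb N' assms(1)])
  moreover have "(\<lambda>s. ?N s ** M s) = (\<lambda>s. mat 1)" using minv(2)[OF inv] by auto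
  ultimately have "((\<lambda>s. mat 1 :: real^'n^'n) has_vector_derivative (?N t ** M' + N' ** M t)) (at t)"
    by simp
  then have 0: "?N t ** M' + N' ** M t = 0"
    using vector_derivative_unique_at has_vector_derivative_const by blast
  have "N' = N' ** M t ** ?N t" by (simp add: matrix_mul_assoc[symmetric] minv(1)[OF inv])
  also have "\<dots> = (N' ** M t + ?N t ** M') ** ?N t - ?N t ** M' ** ?N t"
    by (simp add: bilinear_ladd[OF mm_bilinear] bilinear_lsub[OF mm_bilinear])
  also have "\<dots> = - (?N t ** M' ** ?N t)" using 0 by (simp add: add.commute)
  finally show ?thesis using N' by simp
qed


definition Vf :: "(real^'k::finite \<Rightarrow> real^'k^'k) \<Rightarrow> real \<Rightarrow> 'k st \<Rightarrow> real^'k \<Rightarrow> 'k st" where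
  "Vf P g U b = (g *\<^sub>R hh U + g *\<^sub>R b - (1/2) *\<^sub>R (P (uvel P U) *v uvel P U + P (vvel P U) *v vvel P U),
                 uvel P U, vvel P U)"

definition dotst :: "'k::finite st \<Rightarrow> 'k st \<Rightarrow> real" where
  "dotst X Y = hh X \<bullet> hh Y + qx X \<bullet> qx Y + qy X \<bullet> qy Y"

lemma hh_hvd: "(W has_vector_derivative W') F \<Longrightarrow> ((\<lambda>s. hh (W s)) has_vector_derivative hh W') F"
  unfolding hh_def by (rule bounded_linear.has_vector_derivative[OF bounded_linear_fst])
lemma qx_hvd: "(W has_vector_derivative W') F \<Longrightarrow> ((\<lambda>s. qx (W s)) has_vector_derivative qx W') F"
  unfolding qx_def
  by (rule bounded_linear.has_vector_derivative[OF bounded_linear_compose[OF bounded_linear_fst bounded_linear_snd]])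
lemma qy_hvd: "(W has_vector_derivative W') F \<Longrightarrow> ((\<lambda>s. qy (W s)) has_vector_derivative qy W') F"
  unfolding qy_def
  by (rule bounded_linear.has_vector_derivative[OF bounded_linear_compose[OF bounded_linear_snd bounded_linear_snd]])

lemma vel_deriv:
  fixes h q :: "real \<Rightarrow> real^'k::finite"
  assumes hd: "(h has_vector_derivative h') (at t)" and qd: "(q has_vector_derivative q') (at t)"
    and inv: "\<And>s. invertible (Pop \<rho> \<phi> (h s))"
  shows "\<exists>u'. ((\<lambda>s. matrix_inv (Pop \<rho> \<phi> (h s)) *v q s) has_vector_derivative u') (at t) \<and>
          q' = Pop \<rho> \<phi> (h t) *v u' + Pop \<rho> \<phi> h' *v (matrix_inv (Pop \<rho> \<phi> (h t)) *v q t)"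
proof -
  let ?P = "Pop \<rho> \<phi>"
  let ?u = "\<lambda>s. matrix_inv (?P (h s)) *v q s"
  have Pd: "((\<lambda>s. ?P (h s)) has_vector_derivative ?P h') (at t)"
    by (rule bounded_linear.has_vector_derivative[OF Pop_blin hd])
  have Nd: "((\<lambda>s. matrix_inv (?P (h s))) has_vector_derivative
      - (matrix_inv (?P (h t)) ** ?P h' ** matrix_inv (?P (h t)))) (at t)"
    by (rule minv_hvd[OF Pd inv])
  obtain u' where ud: "(?u has_vector_derivative u') (at t)"
    using bounded_linear.has_vector_derivative bounded_bilinear.has_vector_derivative[OF mv_bb Nd qd] by blast
  have "((\<lambda>s. ?P (h s) *v ?u s) has_vector_derivative (?P (h t) *v u' + ?P h' *v ?u t)) (at t)"
    by (rule bounded_bilinear.has_vector_derivative[OF Pop_bb hd ud])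
  moreover have "(\<lambda>s. ?P (h s) *v ?u s) = q" using minv_vec(1)[OF inv] by auto
  ultimately have "q' = ?P (h t) *v u' + ?P h' *v ?u t"
    using qd vector_derivative_unique_at by auto
  then show ?thesis using ud by blast
qed

lemma energy_deriv:
  fixes W :: "real \<Rightarrow> 'k::finite st"
  assumes Wd: "(W has_vector_derivative W') (at t)"
    and pd: "\<And>s. pos_def (Pop \<rho> \<phi> (hh (W s)))"
  shows "((\<lambda>s. energy (Pop \<rho> \<phi>) g (W s) b) has_real_derivative
            dotst (Vf (Pop \<rho> \<phi>) g (W t) b) W') (at t)"
proof -
  let ?P = "Pop \<rho> \<phi>"
  have inv: "\<And>s. invertible (?P (hh (W s)))" using pd posdef_invertible by blast
  have hd: "((\<lambda>s. hh (W s)) has_vector_derivative hh W') (at t)" by (rule hh_hvd[OF Wd])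
  have qd: "((\<lambda>s. qx (W s)) has_vector_derivative qx W') (at t)" by (rule qx_hvd[OF Wd])
  have rd: "((\<lambda>s. qy (W s)) has_vector_derivative qy W') (at t)" by (rule qy_hvd[OF Wd])
  obtain u' where ud: "((\<lambda>s. uvel ?P (W s)) has_vector_derivative u') (at t)"
     and qe: "qx W' = ?P (hh (W t)) *v u' + ?P (hh W') *v uvel ?P (W t)"
    using vel_deriv[OF hd qd inv] unfolding uvel_def by blast
  obtain v' where vd: "((\<lambda>s. vvel ?P (W s)) has_vector_derivative v') (at t)"
     and re: "qy W' = ?P (hh (W t)) *v v' + ?P (hh W') *v vvel ?P (W t)"
    using vel_deriv[OF hd rd inv] unfolding vvel_def by blast
  define h where "h = hh (W t)"
  define u where "u = uvel ?P (W t)"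
  define v where "v = vvel ?P (W t)"
  have qt: "qx (W t) = ?P h *v u" unfolding h_def u_def uvel_def using minv_vec(1)[OF inv] by simp
  have rt: "qy (W t) = ?P h *v v" unfolding h_def v_def vvel_def using minv_vec(1)[OF inv] by simp
  have hb: "((\<lambda>s. hh (W s) \<bullet> b) has_vector_derivative hh W' \<bullet> b) (at t)"
    by (rule bounded_linear.has_vector_derivative[OF bounded_linear_inner_left hd])
  have "((\<lambda>s. energy ?P g (W s) b) has_vector_derivative
     (1/2) * ((qx (W t) \<bullet> u' + qx W' \<bullet> u) + (qy (W t) \<bullet> v' + qy W' \<bullet> v))
     + (1/2) * g * (h \<bullet> hh W' + hh W' \<bullet> h) + g * (hh W' \<bullet> b)) (at t)"
    unfolding energy_def power2_norm_eq_inner h_def u_def v_def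
    by (intro has_vector_derivative_add has_vector_derivative_mult_right
        bounded_bilinear.has_vector_derivative[OF bounded_bilinear_inner] ud vd qd rd hd hb)
  moreover have "(1/2) * ((qx (W t) \<bullet> u' + qx W' \<bullet> u) + (qy (W t) \<bullet> v' + qy W' \<bullet> v))
     + (1/2) * g * (h \<bullet> hh W' + hh W' \<bullet> h) + g * (hh W' \<bullet> b) = dotst (Vf ?P g (W t) b) W'"
  proof -
    have a: "qx (W t) \<bullet> u' = u \<bullet> qx W' - (?P u *v u) \<bullet> hh W'"
      unfolding qt qe h_def[symmetric] u_def[symmetric]
      by (simp add: Pop_inner[of u \<rho> \<phi> h] inner_add_right Pop_comm[of \<rho> \<phi> "hh W'" u]
          Pop_inner[of u \<rho> \<phi> u] inner_commute)
    have b: "qy (W t) \<bullet> v' = v \<bullet> qy W' - (?P v *v v) \<bullet> hh W'"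
      unfolding rt re h_def[symmetric] v_def[symmetric]
      by (simp add: Pop_inner[of v \<rho> \<phi> h] inner_add_right Pop_comm[of \<rho> \<phi> "hh W'" v]
          Pop_inner[of v \<rho> \<phi> v] inner_commute)
    show ?thesis unfolding a b
      by (simp add: dotst_def Vf_def hh_def qx_def qy_def h_def u_def v_def inner_diff_left inner_add_left
          inner_commute algebra_simps)
  qed
  ultimately show ?thesis by (simp add: has_real_derivative_iff_has_vector_derivative)
qed


definition tri :: "(real^'d \<Rightarrow> real) \<Rightarrow> ('k::finite \<Rightarrow> real^'d \<Rightarrow> real) \<Rightarrow> real^'k \<Rightarrow> real^'k \<Rightarrow> real^'k \<Rightarrow> real" where
  "tri \<rho> \<phi> x y z = x \<bullet> (Pop \<rho> \<phi> y *v z)"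

lemma tri_swap23: "tri \<rho> \<phi> x y z = tri \<rho> \<phi> x z y"
  unfolding tri_def using Pop_comm by metis
lemma tri_swap13: "tri \<rho> \<phi> x y z = tri \<rho> \<phi> z y x"
  unfolding tri_def by (metis Pop_inner inner_commute)
lemma tri_swap12: "tri \<rho> \<phi> x y z = tri \<rho> \<phi> y x z"
  by (metis tri_swap13 tri_swap23)

lemma smat_mv: "(c *\<^sub>R (A::real^'n^'m)) *v z = c *\<^sub>R (A *v z)"
  by (simp add: vec_eq_iff matrix_vector_mult_def sum_distrib_left algebra_simps)

lemma tri_lin:
  "tri \<rho> \<phi> (x + x') y z = tri \<rho> \<phi> x y z + tri \<rho> \<phi> x' y z"
  "tri \<rho> \<phi> (x - x') y z = tri \<rho> \<phi> x y z - tri \<rho> \<phi> x' y z"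
  "tri \<rho> \<phi> (c *\<^sub>R x) y z = c * tri \<rho> \<phi> x y z"
  "tri \<rho> \<phi> x (y + y') z = tri \<rho> \<phi> x y z + tri \<rho> \<phi> x y' z"
  "tri \<rho> \<phi> x (y - y') z = tri \<rho> \<phi> x y z - tri \<rho> \<phi> x y' z"
  "tri \<rho> \<phi> x (c *\<^sub>R y) z = c * tri \<rho> \<phi> x y z"
  "tri \<rho> \<phi> x y (z + z') = tri \<rho> \<phi> x y z + tri \<rho> \<phi> x y z'"
  "tri \<rho> \<phi> x y (z - z') = tri \<rho> \<phi> x y z - tri \<rho> \<phi> x y z'"
  "tri \<rho> \<phi> x y (c *\<^sub>R z) = c * tri \<rho> \<phi> x y z"
  unfolding tri_def
  by (simp_all add: inner_add_left inner_diff_left Pop_add Pop_diff Pop_scaleR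
      matrix_vector_mult_add_rdistrib matrix_vector_mult_diff_rdistrib matrix_vector_right_distrib
      matrix_vector_mult_diff_distrib smat_mv matrix_vector_mult_scaleR
      inner_add_right inner_diff_right)

lemma Q2:
  "g * ((hR - hL) \<bullet> (Pop \<rho> \<phi> ((1/2) *\<^sub>R (hL + hR)) *v ((1/2) *\<^sub>R (uL + uR))))
   + (g/2) * ((uR - uL) \<bullet> ((1/2) *\<^sub>R (Pop \<rho> \<phi> hL *v hL + Pop \<rho> \<phi> hR *v hR)))
   = (g/2) * (uR \<bullet> (Pop \<rho> \<phi> hR *v hR)) - (g/2) * (uL \<bullet> (Pop \<rho> \<phi> hL *v hL))"
proof -
  have e: "x \<bullet> (Pop \<rho> \<phi> y *v z) = tri \<rho> \<phi> x y z" for x y z by (simp add: tri_def)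
  show ?thesis
    by (simp add: e inner_add_right inner_scaleR_right tri_lin)
       (simp add: tri_swap12[of \<rho> \<phi> _ _ _] tri_swap23[of \<rho> \<phi> _ _ _] field_simps)
qed


lemma Q1:
  "- (1/2) * ((Pop \<rho> \<phi> b *v b - Pop \<rho> \<phi> a *v a) \<bullet> w) + (b - a) \<bullet> (Pop \<rho> \<phi> ((1/2) *\<^sub>R (a + b)) *v w) = 0"
proof -
  have "(b - a) \<bullet> (Pop \<rho> \<phi> ((1/2) *\<^sub>R (a + b)) *v w) = (Pop \<rho> \<phi> ((1/2) *\<^sub>R (b + a)) *v (b - a)) \<bullet> w"
    by (simp add: Pop_inner add.commute)
  also have "\<dots> = (1/2) * ((Pop \<rho> \<phi> b *v b - Pop \<rho> \<phi> a *v a) \<bullet> w)"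
    by (simp add: Pop_avg_diff)
  finally show ?thesis by simp
qed

lemma HR_core:
  fixes hL hR uL uR vL vR bL bR :: "real^'k::finite"
    and g :: real and \<rho> :: "real^'d \<Rightarrow> real" and \<phi> :: "'k \<Rightarrow> real^'d \<Rightarrow> real"
  defines "P \<equiv> Pop \<rho> \<phi>"
  defines "hb \<equiv> (1/2) *\<^sub>R (hL + hR)" and "ub \<equiv> (1/2) *\<^sub>R (uL + uR)" and "vb \<equiv> (1/2) *\<^sub>R (vL + vR)"
  defines "F1 \<equiv> P hb *v ub"
  defines "F2 \<equiv> (g/2) *\<^sub>R ((1/2) *\<^sub>R (P hL *v hL + P hR *v hR)) + P ub *v F1"
  defines "F3 \<equiv> P vb *v F1"
  shows "(g *\<^sub>R hL + g *\<^sub>R bL - (1/2) *\<^sub>R (P uL *v uL + P vL *v vL)) \<bullet> F1 + uL \<bullet> F2 + vL \<bullet> F3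
           - (g/2) * (uL \<bullet> (P hL *v hL)) + (g/2) * ((bR - bL) \<bullet> (P hb *v uL))
       = (g *\<^sub>R hR + g *\<^sub>R bR - (1/2) *\<^sub>R (P uR *v uR + P vR *v vR)) \<bullet> F1 + uR \<bullet> F2 + vR \<bullet> F3
           - (g/2) * (uR \<bullet> (P hR *v hR)) - (g/2) * ((bR - bL) \<bullet> (P hb *v uR))"
proof -
  have q1u: "- (1/2) * ((P uR *v uR - P uL *v uL) \<bullet> F1) + (uR - uL) \<bullet> (P ub *v F1) = 0"
    unfolding P_def ub_def by (rule Q1)
  have q1v: "- (1/2) * ((P vR *v vR - P vL *v vL) \<bullet> F1) + (vR - vL) \<bullet> (P vb *v F1) = 0"
    unfolding P_def vb_def by (rule Q1)
  have q2: "g * ((hR - hL) \<bullet> F1) + (g/2) * ((uR - uL) \<bullet> ((1/2) *\<^sub>R (P hL *v hL + P hR *v hR)))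
     = (g/2) * (uR \<bullet> (P hR *v hR)) - (g/2) * (uL \<bullet> (P hL *v hL))"
    unfolding P_def F1_def hb_def ub_def by (rule Q2)
  have bb: "(bR - bL) \<bullet> F1 = (1/2) * ((bR - bL) \<bullet> (P hb *v uL)) + (1/2) * ((bR - bL) \<bullet> (P hb *v uR))"
    unfolding F1_def ub_def
    by (simp add: matrix_vector_right_distrib matrix_vector_mult_scaleR inner_add_right algebra_simps)
  have bbg: "g * ((bR - bL) \<bullet> F1) = (g/2) * ((bR - bL) \<bullet> (P hb *v uL)) + (g/2) * ((bR - bL) \<bullet> (P hb *v uR))"
    unfolding bb by (simp add: algebra_simps)
  show ?thesis
    using q1u q1v q2 bbg unfolding F2_def F3_def
    apply (simp only: inner_add_left inner_diff_left inner_add_right inner_diff_right inner_scaleR_left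
        inner_scaleR_right)
    by (simp add: algebra_simps)
qed


definition Hf :: "(real^'d \<Rightarrow> real) \<Rightarrow> ('k::finite \<Rightarrow> real^'d \<Rightarrow> real) \<Rightarrow> real \<Rightarrow> 'k st \<Rightarrow> 'k st \<Rightarrow> real^'k \<Rightarrow> real^'k \<Rightarrow> real" where
  "Hf \<rho> \<phi> g L R bL bR = dotst (Vf (Pop \<rho> \<phi>) g L bL) (Fec (Pop \<rho> \<phi>) g L R)
     - (g/2) * (uvel (Pop \<rho> \<phi>) L \<bullet> (Pop \<rho> \<phi> (hh L) *v hh L))
     + (g/2) * ((bR - bL) \<bullet> (Pop \<rho> \<phi> (avg (hh L) (hh R)) *v uvel (Pop \<rho> \<phi>) L))"

definition Kf :: "(real^'d \<Rightarrow> real) \<Rightarrow> ('k::finite \<Rightarrow> real^'d \<Rightarrow> real) \<Rightarrow> real \<Rightarrow> 'k st \<Rightarrow> 'k st \<Rightarrow> real^'k \<Rightarrow> real^'k \<Rightarrow> real" where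
  "Kf \<rho> \<phi> g L R bL bR = dotst (Vf (Pop \<rho> \<phi>) g L bL) (Gec (Pop \<rho> \<phi>) g L R)
     - (g/2) * (vvel (Pop \<rho> \<phi>) L \<bullet> (Pop \<rho> \<phi> (hh L) *v hh L))
     + (g/2) * ((bR - bL) \<bullet> (Pop \<rho> \<phi> (avg (hh L) (hh R)) *v vvel (Pop \<rho> \<phi>) L))"

lemma Hf_R: "Hf \<rho> \<phi> g L R bL bR = dotst (Vf (Pop \<rho> \<phi>) g R bR) (Fec (Pop \<rho> \<phi>) g L R)
     - (g/2) * (uvel (Pop \<rho> \<phi>) R \<bullet> (Pop \<rho> \<phi> (hh R) *v hh R))
     - (g/2) * ((bR - bL) \<bullet> (Pop \<rho> \<phi> (avg (hh L) (hh R)) *v uvel (Pop \<rho> \<phi>) R))"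
  unfolding Hf_def dotst_def Vf_def Fec_def Let_def avg_def hh_def qx_def qy_def
  apply (simp only: fst_conv snd_conv)
  by (rule HR_core)

lemma swap_lemma: "(a::real) + b + c - d + e = a' + b' + c' - d' - e' \<Longrightarrow> a + c + b - d + e = a' + c' + b' - d' - e'"
  by linarith

lemma Kf_R: "Kf \<rho> \<phi> g L R bL bR = dotst (Vf (Pop \<rho> \<phi>) g R bR) (Gec (Pop \<rho> \<phi>) g L R)
     - (g/2) * (vvel (Pop \<rho> \<phi>) R \<bullet> (Pop \<rho> \<phi> (hh R) *v hh R))
     - (g/2) * ((bR - bL) \<bullet> (Pop \<rho> \<phi> (avg (hh L) (hh R)) *v vvel (Pop \<rho> \<phi>) R))"
  unfolding Kf_def dotst_def Vf_def Gec_def Let_def avg_def hh_def qx_def qy_def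
  apply (simp only: fst_conv snd_conv)
  apply (simp only: add.commute[of "Pop \<rho> \<phi> (uvel (Pop \<rho> \<phi>) L) *v uvel (Pop \<rho> \<phi>) L"]
     add.commute[of "Pop \<rho> \<phi> (uvel (Pop \<rho> \<phi>) R) *v uvel (Pop \<rho> \<phi>) R"])
  apply (rule swap_lemma)
  by (rule HR_core)


lemma dotst_lin:
  "dotst X (Y + Z) = dotst X Y + dotst X Z"
  "dotst X (Y - Z) = dotst X Y - dotst X Z"
  "dotst X (c *\<^sub>R Y) = c * dotst X Y"
  "dotst X (- Y) = - dotst X Y"
  by (simp_all add: dotst_def hh_def qx_def qy_def inner_add_right inner_diff_right algebra_simps)

lemma inner_Pop_swap: "u \<bullet> (Pop \<rho> \<phi> m *v d) = d \<bullet> (Pop \<rho> \<phi> m *v u)"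
  by (subst Pop_inner) (rule inner_commute)

lemma EI:
  fixes U :: "int \<Rightarrow> int \<Rightarrow> 'k::finite st"
  assumes dx: "dx \<noteq> 0" and dy: "dy \<noteq> 0"
  shows "dotst (Vf (Pop \<rho> \<phi>) g (U i j) (B i j)) (scheme_rhs (Pop \<rho> \<phi>) g dx dy U B i j)
    = - (Hf \<rho> \<phi> g (U i j) (U (i+1) j) (B i j) (B (i+1) j) - Hf \<rho> \<phi> g (U (i-1) j) (U i j) (B (i-1) j) (B i j)) / dx
      - (Kf \<rho> \<phi> g (U i j) (U i (j+1)) (B i j) (B i (j+1)) - Kf \<rho> \<phi> g (U i (j-1)) (U i j) (B i (j-1)) (B i j)) / dy"
proof -
  let ?P = "Pop \<rho> \<phi>"
  let ?V = "Vf ?P g (U i j) (B i j)"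
  let ?u = "uvel ?P (U i j)" and ?v = "vvel ?P (U i j)"
  let ?ps = "uvel ?P (U i j) \<bullet> (?P (hh (U i j)) *v hh (U i j))"
  let ?psy = "vvel ?P (U i j) \<bullet> (?P (hh (U i j)) *v hh (U i j))"
  let ?b1 = "(B (i+1) j - B i j) \<bullet> (?P (avg (hh (U i j)) (hh (U (i+1) j))) *v ?u)"
  let ?b2 = "(B i j - B (i-1) j) \<bullet> (?P (avg (hh (U (i-1) j)) (hh (U i j))) *v ?u)"
  let ?c1 = "(B i (j+1) - B i j) \<bullet> (?P (avg (hh (U i j)) (hh (U i (j+1)))) *v ?v)"
  let ?c2 = "(B i j - B i (j-1)) \<bullet> (?P (avg (hh (U i (j-1))) (hh (U i j))) *v ?v)"
  have x1: "dotst ?V (Fec ?P g (U i j) (U (i+1) j)) = Hf \<rho> \<phi> g (U i j) (U (i+1) j) (B i j) (B (i+1) j) + (g/2) * ?ps - (g/2) * ?b1"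
    by (simp add: Hf_def)
  have x2: "dotst ?V (Fec ?P g (U (i-1) j) (U i j)) = Hf \<rho> \<phi> g (U (i-1) j) (U i j) (B (i-1) j) (B i j) + (g/2) * ?ps + (g/2) * ?b2"
    by (simp add: Hf_R)
  have y1: "dotst ?V (Gec ?P g (U i j) (U i (j+1))) = Kf \<rho> \<phi> g (U i j) (U i (j+1)) (B i j) (B i (j+1)) + (g/2) * ?psy - (g/2) * ?c1"
    by (simp add: Kf_def)
  have y2: "dotst ?V (Gec ?P g (U i (j-1)) (U i j)) = Kf \<rho> \<phi> g (U i (j-1)) (U i j) (B i (j-1)) (B i j) + (g/2) * ?psy + (g/2) * ?c2"
    by (simp add: Kf_R)
  have s: "dotst ?V (Ssrc ?P g dx dy U B i j) = - (g / (2*dx)) * (?b1 + ?b2) - (g / (2*dy)) * (?c1 + ?c2)"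
    by (simp add: Ssrc_def dotst_def Vf_def hh_def qx_def qy_def inner_add_right inner_Pop_swap[of ?u]
        inner_Pop_swap[of ?v])
  show ?thesis
    unfolding scheme_rhs_def dotst_lin x1 x2 y1 y2 s
    using dx dy by (simp add: field_simps)
qed


fun Ck :: "nat \<Rightarrow> (real \<Rightarrow> 'a::real_normed_vector) \<Rightarrow> bool" where
  "Ck 0 f = True"
| "Ck (Suc n) f = (\<exists>f'. (\<forall>x. (f has_vector_derivative f' x) (at x)) \<and> Ck n f')"

lemma Ck_mono: "Ck (Suc n) f \<Longrightarrow> Ck n f"
proof (induction n arbitrary: f)
  case 0 then show ?case by simp
next
  case (Suc n)
  then obtain f' where "\<forall>x. (f has_vector_derivative f' x) (at x)" "Ck (Suc n) f'" by auto
  then show ?case using Suc.IH by auto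
qed

lemma Ck_const: "Ck n (\<lambda>s. c)"
proof (induction n arbitrary: c)
  case (Suc n)
  have "Ck n (\<lambda>s. 0::'a)" by (rule Suc.IH)
  then show ?case by (auto intro!: exI[of _ "\<lambda>x. 0"])
qed simp

lemma Ck_add: "Ck n f \<Longrightarrow> Ck n g \<Longrightarrow> Ck n (\<lambda>s. f s + g s)"
proof (induction n arbitrary: f g)
  case 0 then show ?case by simp
next
  case (Suc n)
  then obtain f' g' where d: "\<forall>x. (f has_vector_derivative f' x) (at x)" "Ck n f'"
     "\<forall>x. (g has_vector_derivative g' x) (at x)" "Ck n g'" by auto
  then have "Ck n (\<lambda>x. f' x + g' x)" using Suc.IH by blast
  moreover have "\<forall>x. ((\<lambda>s. f s + g s) has_vector_derivative f' x + g' x) (at x)"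
    using d by (auto intro: has_vector_derivative_add)
  ultimately show ?case by auto
qed

lemma Ck_blin: "bounded_linear L \<Longrightarrow> Ck n f \<Longrightarrow> Ck n (\<lambda>s. L (f s))"
proof (induction n arbitrary: f)
  case 0 then show ?case by simp
next
  case (Suc n)
  then obtain f' where d: "\<forall>x. (f has_vector_derivative f' x) (at x)" "Ck n f'" by auto
  then have "Ck n (\<lambda>x. L (f' x))" using Suc by blast
  moreover have "\<forall>x. ((\<lambda>s. L (f s)) has_vector_derivative L (f' x)) (at x)"
    using d Suc.prems(1) by (auto intro: bounded_linear.has_vector_derivative)
  ultimately show ?case by auto
qed

lemma Ck_bil: "bounded_bilinear b \<Longrightarrow> Ck n f \<Longrightarrow> Ck n g \<Longrightarrow> Ck n (\<lambda>s. b (f s) (g s))"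
proof (induction n arbitrary: f g)
  case 0 then show ?case by simp
next
  case (Suc n)
  then obtain f' g' where d: "\<forall>x. (f has_vector_derivative f' x) (at x)" "Ck n f'"
     "\<forall>x. (g has_vector_derivative g' x) (at x)" "Ck n g'" by auto
  have "Ck n f" "Ck n g" using Suc.prems Ck_mono by auto
  then have "Ck n (\<lambda>s. b (f s) (g' s) + b (f' s) (g s))"
    using Suc.IH Suc.prems(1) d Ck_add by blast
  moreover have "\<forall>x. ((\<lambda>s. b (f s) (g s)) has_vector_derivative b (f x) (g' x) + b (f' x) (g x)) (at x)"
    using d by (auto intro: bounded_bilinear.has_vector_derivative[OF Suc.prems(1)])
  ultimately show ?case by auto
qed

lemma Ck_minus: "Ck n f \<Longrightarrow> Ck n (\<lambda>s. - f s)"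
  using Ck_blin[OF bounded_linear_minus[OF bounded_linear_ident]] by auto

lemma Ck_diff: "Ck n f \<Longrightarrow> Ck n g \<Longrightarrow> Ck n (\<lambda>s. f s - g s)"
  using Ck_add[of n f "\<lambda>s. - g s"] Ck_minus by auto

lemma Ck_scaleR: "Ck n f \<Longrightarrow> Ck n (\<lambda>s. c *\<^sub>R f s)"
  using Ck_blin[OF bounded_linear_scaleR_right] by auto

lemma Ck_Pair: "Ck n f \<Longrightarrow> Ck n g \<Longrightarrow> Ck n (\<lambda>s. (f s, g s))"
proof -
  assume "Ck n f" "Ck n g"
  then have "Ck n (\<lambda>s. (f s, 0) + (0, g s))"
    by (intro Ck_add Ck_blin[OF bounded_linear_Pair[OF bounded_linear_ident bounded_linear_zero]]
        Ck_blin[OF bounded_linear_Pair[OF bounded_linear_zero bounded_linear_ident]])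
  then show ?thesis by simp
qed

lemma Ck_inv:
  fixes M :: "real \<Rightarrow> real^'n^'n"
  shows "(\<forall>s. invertible (M s)) \<Longrightarrow> Ck n M \<Longrightarrow> Ck n (\<lambda>s. matrix_inv (M s))"
proof (induction n arbitrary: M)
  case 0 then show ?case by simp
next
  case (Suc n)
  then obtain M' where d: "\<forall>x. (M has_vector_derivative M' x) (at x)" "Ck n M'" by auto
  have "Ck n M" using Suc.prems Ck_mono by auto
  then have N: "Ck n (\<lambda>s. matrix_inv (M s))" using Suc.IH Suc.prems(1) by blast
  have D: "Ck n (\<lambda>s. - (matrix_inv (M s) ** M' s ** matrix_inv (M s)))"
    by (intro Ck_minus Ck_bil[OF mm_bb] N d(2))
  have "((\<lambda>s. matrix_inv (M s)) has_vector_derivative - (matrix_inv (M x) ** M' x ** matrix_inv (M x))) (at x)" for x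
    using minv_hvd[of M "M' x" x] d(1) Suc.prems(1) by blast
  then show ?case using D by (intro Ck.simps(2)[THEN iffD2] exI[of _ "\<lambda>x. - (matrix_inv (M x) ** M' x ** matrix_inv (M x))"]) auto
qed


lemma shift_hvd:
  assumes "(g has_vector_derivative D) (at (x + s))"
  shows "((\<lambda>t. g (x + t)) has_vector_derivative D) (at s)"
proof -
  have "((\<lambda>t. x + t) has_vector_derivative 1) (at s)"
    by (auto intro!: derivative_eq_intros)
  from vector_diff_chain_at[OF this] assms show ?thesis by (simp add: o_def)
qed

lemma smooth2_Ck:
  "smooth2 F \<Longrightarrow> Ck n (\<lambda>s. F (x + s) y) \<and> Ck n (\<lambda>s. F x (y + s))"
proof (induction n arbitrary: F x y)
  case 0 then show ?case by simp
next
  case (Suc n)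
  from Suc.prems obtain fx fy where
    dx: "\<And>x y. ((\<lambda>s. F s y) has_vector_derivative fx x y) (at x)" and
    dy: "\<And>x y. ((\<lambda>s. F x s) has_vector_derivative fy x y) (at y)" and
    sx: "smooth2 fx" and sy: "smooth2 fy"
    by (cases rule: smooth2.cases) blast
  have c1: "Ck n (\<lambda>s. fx (x + s) y)" using Suc.IH[OF sx] by blast
  have c2: "Ck n (\<lambda>s. fy x (y + s))" using Suc.IH[OF sy] by blast
  have d1: "((\<lambda>s. F (x + s) y) has_vector_derivative fx (x + t) y) (at t)" for t
    using shift_hvd[of "\<lambda>s. F s y" "fx (x + t) y" x t] dx by blast
  have d2: "((\<lambda>s. F x (y + s)) has_vector_derivative fy x (y + t)) (at t)" for t
    using shift_hvd[of "\<lambda>s. F x s" "fy x (y + t)" y t] dy by blast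
  show ?case
    by (intro conjI Ck.simps(2)[THEN iffD2] exI[of _ "\<lambda>t. fx (x + t) y"] exI[of _ "\<lambda>t. fy x (y + t)"])
       (use c1 c2 d1 d2 in auto)
qed


lemma mvt_vec:
  fixes f :: "real \<Rightarrow> 'a::real_normed_vector"
  assumes ab: "a \<le> b" and d: "\<And>t. t \<in> {a..b} \<Longrightarrow> (f has_vector_derivative f' t) (at t)"
    and B: "\<And>t. t \<in> {a..b} \<Longrightarrow> norm (f' t) \<le> B"
  shows "norm (f b - f a) \<le> B * (b - a)"
proof -
  have "norm (f b - f a) \<le> B * norm (b - a)"
  proof (rule differentiable_bound[of "{a..b}" f "\<lambda>t h. h *\<^sub>R f' t" B b a])
    show "convex {a..b}" by simp
    show "(f has_derivative (\<lambda>h. h *\<^sub>R f' x)) (at x within {a..b})" if "x \<in> {a..b}" for x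
      using d[OF that] by (simp add: has_vector_derivative_def has_derivative_at_withinI)
    show "onorm (\<lambda>h. h *\<^sub>R f' x) \<le> B" if "x \<in> {a..b}" for x
      using B[OF that] by (simp add: onorm_scaleR_left[OF bounded_linear_ident] onorm_id)
  qed (use ab in auto)
  then show ?thesis using ab by simp
qed

lemma neg_hvd:
  assumes "(g has_vector_derivative D) (at (- s))"
  shows "((\<lambda>t. g (- t)) has_vector_derivative - D) (at s)"
proof -
  have "((\<lambda>t. - t) has_vector_derivative -1) (at s)"
    by (auto intro!: derivative_eq_intros)
  from vector_diff_chain_at[OF this] assms show ?thesis by (simp add: o_def)
qed

lemma odd_taylor:
  fixes A :: "real \<Rightarrow> 'a::real_normed_vector"
  assumes ck: "Ck 4 A" and dA: "(A has_vector_derivative D) (at 0)"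
  shows "\<exists>C. \<forall>h. 0 < h \<longrightarrow> h < 1 \<longrightarrow> norm ((1/h) *\<^sub>R (A h - A (-h)) - 2 *\<^sub>R D) \<le> C * h^2"
proof -
  obtain A1 A2 A3 A4 where
    d1: "\<And>x. (A has_vector_derivative A1 x) (at x)" and
    d2: "\<And>x. (A1 has_vector_derivative A2 x) (at x)" and
    d3: "\<And>x. (A2 has_vector_derivative A3 x) (at x)" and
    d4: "\<And>x. (A3 has_vector_derivative A4 x) (at x)"
    using ck by (auto simp: numeral_eq_Suc)
  have D: "D = A1 0" using vector_derivative_unique_at[OF dA d1] .
  have "continuous_on {-1..1} A3"
    using d4 continuous_on_vector_derivative has_vector_derivative_at_within by blast
  then have "compact (A3 ` {-1..1})" by (intro compact_continuous_image) auto
  then obtain M0 where M0: "\<And>y. y \<in> A3 ` {-1..1} \<Longrightarrow> norm y \<le> M0"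
    using compact_imp_bounded bounded_iff by metis
  define M where "M = max M0 0"
  have M: "\<And>t. t \<in> {-1..1} \<Longrightarrow> norm (A3 t) \<le> M" "M \<ge> 0"
    using M0 unfolding M_def by force+
  have main: "norm ((1/h) *\<^sub>R (A h - A (-h)) - 2 *\<^sub>R D) \<le> (2*M) * h^2" if h: "0 < h" "h < 1" for h
  proof -
    have s1: "norm (A2 \<tau> - A2 (-\<tau>)) \<le> 2 * M * h" if "\<tau> \<in> {0..h}" for \<tau>
    proof -
      have "norm (A2 \<tau> - A2 (-\<tau>)) \<le> M * (\<tau> - (-\<tau>))"
        by (rule mvt_vec) (use that h d3 M in auto)
      also have "\<dots> \<le> 2 * M * h" using that M(2) by (auto intro: mult_left_mono)
      finally show ?thesis .
    qed
    define p1 where "p1 = (\<lambda>\<tau>. A1 \<tau> + A1 (-\<tau>) - 2 *\<^sub>R A1 0)"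
    have dp1: "(p1 has_vector_derivative (A2 \<tau> - A2 (-\<tau>))) (at \<tau>)" for \<tau>
      unfolding p1_def
      using has_vector_derivative_diff[OF has_vector_derivative_add[OF d2 neg_hvd[OF d2]] has_vector_derivative_const]
      by simp
    have s2: "norm (p1 \<tau>) \<le> 2 * M * h * h" if "\<tau> \<in> {0..h}" for \<tau>
    proof -
      have "norm (p1 \<tau> - p1 0) \<le> (2 * M * h) * (\<tau> - 0)"
        by (rule mvt_vec) (use that dp1 s1 in auto)
      also have "\<dots> \<le> 2 * M * h * h" using that M(2) h by (auto intro: mult_left_mono)
      finally show ?thesis by (simp add: p1_def scaleR_2)
    qed
    define p0 where "p0 = (\<lambda>s. A s - A (-s) - (2 * s) *\<^sub>R A1 0)"
    have dp0: "(p0 has_vector_derivative p1 s) (at s)" for s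
    proof -
      have "((\<lambda>s. (2 * s) *\<^sub>R A1 0) has_vector_derivative 2 *\<^sub>R A1 0) (at s)"
        by (auto intro!: derivative_eq_intros)
      from has_vector_derivative_diff[OF has_vector_derivative_diff[OF d1 neg_hvd[OF d1]] this]
      show ?thesis unfolding p0_def p1_def by simp
    qed
    have "norm (p0 h - p0 0) \<le> (2 * M * h * h) * (h - 0)"
      by (rule mvt_vec) (use h dp0 s2 in auto)
    then have "norm (p0 h) \<le> 2 * M * h^3" by (simp add: p0_def power3_eq_cube)
    moreover have "(1/h) *\<^sub>R (A h - A (-h)) - 2 *\<^sub>R D = (1/h) *\<^sub>R p0 h"
      using h unfolding p0_def D by (simp add: algebra_simps)
    ultimately have "norm ((1/h) *\<^sub>R (A h - A (-h)) - 2 *\<^sub>R D) \<le> (1/h) * (2 * M * h^3)"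
      using h by (simp add: divide_right_mono)
    also have "\<dots> = (2*M) * h^2" using h by (simp add: power3_eq_cube power2_eq_square)
    finally show ?thesis .
  qed
  then show ?thesis by blast
qed


lemma Ck_Pop_mv: "Ck n f \<Longrightarrow> Ck n g \<Longrightarrow> Ck n (\<lambda>s. Pop \<rho> \<phi> (f s) *v g s)"
  by (rule Ck_bil[OF Pop_bb])

lemma Ck_avg: "Ck n f \<Longrightarrow> Ck n g \<Longrightarrow> Ck n (\<lambda>s. avg (f s) (g s))"
  unfolding avg_def by (intro Ck_scaleR Ck_add)

lemma Ck_hh: "Ck n W \<Longrightarrow> Ck n (\<lambda>s. hh (W s))"
  unfolding hh_def by (rule Ck_blin[OF bounded_linear_fst])
lemma Ck_qx: "Ck n W \<Longrightarrow> Ck n (\<lambda>s. qx (W s))"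
  unfolding qx_def by (rule Ck_blin[OF bounded_linear_compose[OF bounded_linear_fst bounded_linear_snd]])
lemma Ck_qy: "Ck n W \<Longrightarrow> Ck n (\<lambda>s. qy (W s))"
  unfolding qy_def by (rule Ck_blin[OF bounded_linear_compose[OF bounded_linear_snd bounded_linear_snd]])

lemma Ck_uvel:
  assumes "\<forall>s. invertible (Pop \<rho> \<phi> (hh (W s)))" "Ck n W"
  shows "Ck n (\<lambda>s. uvel (Pop \<rho> \<phi>) (W s))" "Ck n (\<lambda>s. vvel (Pop \<rho> \<phi>) (W s))"
proof -
  have N: "Ck n (\<lambda>s. matrix_inv (Pop \<rho> \<phi> (hh (W s))))"
    by (rule Ck_inv[OF assms(1)]) (rule Ck_blin[OF Pop_blin Ck_hh[OF assms(2)]])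
  show "Ck n (\<lambda>s. uvel (Pop \<rho> \<phi>) (W s))" unfolding uvel_def
    by (rule Ck_bil[OF mv_bb N Ck_qx[OF assms(2)]])
  show "Ck n (\<lambda>s. vvel (Pop \<rho> \<phi>) (W s))" unfolding vvel_def
    by (rule Ck_bil[OF mv_bb N Ck_qy[OF assms(2)]])
qed

lemma Ck_Fec_Gec:
  assumes inv1: "\<forall>s. invertible (Pop \<rho> \<phi> (hh (W1 s)))" and inv2: "\<forall>s. invertible (Pop \<rho> \<phi> (hh (W2 s)))"
    and c1: "Ck n W1" and c2: "Ck n W2"
  shows "Ck n (\<lambda>s. Fec (Pop \<rho> \<phi>) g (W1 s) (W2 s))" "Ck n (\<lambda>s. Gec (Pop \<rho> \<phi>) g (W1 s) (W2 s))"
proof -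
  note u1 = Ck_uvel[OF inv1 c1] and u2 = Ck_uvel[OF inv2 c2]
  have hb: "Ck n (\<lambda>s. avg (hh (W1 s)) (hh (W2 s)))" by (intro Ck_avg Ck_hh c1 c2)
  have ub: "Ck n (\<lambda>s. avg (uvel (Pop \<rho> \<phi>) (W1 s)) (uvel (Pop \<rho> \<phi>) (W2 s)))" by (intro Ck_avg u1 u2)
  have vb: "Ck n (\<lambda>s. avg (vvel (Pop \<rho> \<phi>) (W1 s)) (vvel (Pop \<rho> \<phi>) (W2 s)))" by (intro Ck_avg u1 u2)
  have ph: "Ck n (\<lambda>s. avg (Pop \<rho> \<phi> (hh (W1 s)) *v hh (W1 s)) (Pop \<rho> \<phi> (hh (W2 s)) *v hh (W2 s)))"
    by (intro Ck_avg Ck_Pop_mv Ck_hh c1 c2)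
  show "Ck n (\<lambda>s. Fec (Pop \<rho> \<phi>) g (W1 s) (W2 s))" unfolding Fec_def Let_def
    by (intro Ck_Pair Ck_Pop_mv Ck_add Ck_scaleR hb ub vb ph)
  show "Ck n (\<lambda>s. Gec (Pop \<rho> \<phi>) g (W1 s) (W2 s))" unfolding Gec_def Let_def
    by (intro Ck_Pair Ck_Pop_mv Ck_add Ck_scaleR hb ub vb ph)
qed


lemma Pop_mv_hvd:
  "(f has_vector_derivative f') (at t) \<Longrightarrow> (g has_vector_derivative g') (at t) \<Longrightarrow>
   ((\<lambda>s. Pop \<rho> \<phi> (f s) *v g s) has_vector_derivative (Pop \<rho> \<phi> (f t) *v g' + Pop \<rho> \<phi> f' *v g t)) (at t)"
  by (rule bounded_bilinear.has_vector_derivative[OF Pop_bb])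

lemma avg_hvd:
  "(f has_vector_derivative f') F \<Longrightarrow> (g has_vector_derivative g') F \<Longrightarrow>
   ((\<lambda>s. avg (f s) (g s)) has_vector_derivative avg f' g') F"
  unfolding avg_def
  by (rule bounded_linear.has_vector_derivative[OF bounded_linear_scaleR_right has_vector_derivative_add])

lemma scaleR_hvd:
  "(f has_vector_derivative f') F \<Longrightarrow> ((\<lambda>s. c *\<^sub>R f s) has_vector_derivative c *\<^sub>R f') F"
  by (rule bounded_linear.has_vector_derivative[OF bounded_linear_scaleR_right])

lemma Pair3_hvd:
  "(f1 has_vector_derivative a) (at t) \<Longrightarrow> (f2 has_vector_derivative b) (at t) \<Longrightarrow> (f3 has_vector_derivative c) (at t) \<Longrightarrow>
   ((\<lambda>s. (f1 s, f2 s, f3 s)) has_vector_derivative (a, b, c)) (at t)"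
  by (intro has_vector_derivative_Pair)

lemma avg_same: "avg a a = a" by (simp add: avg_def scaleR_2[symmetric])
lemma avg_0: "avg 0 a = (1/2) *\<^sub>R a" by (simp add: avg_def)

lemma dir_x:
  fixes W :: "real \<Rightarrow> 'k::finite st" and Bw :: "real \<Rightarrow> real^'k"
  assumes inv: "\<forall>s. invertible (Pop \<rho> \<phi> (hh (W s)))"
    and Wd: "(W has_vector_derivative W') (at 0)" and Bd: "(Bw has_vector_derivative b1) (at 0)"
  shows "\<exists>E. ((\<lambda>s. Fhat (Pop \<rho> \<phi>) g (W s)) has_vector_derivative E) (at 0) \<and>
    ((\<lambda>s. Fec (Pop \<rho> \<phi>) g (W 0) (W s) + (0, (g/2) *\<^sub>R (Pop \<rho> \<phi> (avg (hh (W 0)) (hh (W s))) *v (Bw s - Bw 0)), 0))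
       has_vector_derivative (1/2) *\<^sub>R (E + (0, g *\<^sub>R (Pop \<rho> \<phi> (hh (W 0)) *v b1), 0))) (at 0)"
proof -
  let ?P = "Pop \<rho> \<phi>"
  have hd: "((\<lambda>s. hh (W s)) has_vector_derivative hh W') (at 0)" by (rule hh_hvd[OF Wd])
  have qd: "((\<lambda>s. qx (W s)) has_vector_derivative qx W') (at 0)" by (rule qx_hvd[OF Wd])
  have rd: "((\<lambda>s. qy (W s)) has_vector_derivative qy W') (at 0)" by (rule qy_hvd[OF Wd])
  have inv': "\<And>s. invertible (?P (hh (W s)))" using inv by blast
  obtain u1 where ud: "((\<lambda>s. uvel ?P (W s)) has_vector_derivative u1) (at 0)"
     and qe: "qx W' = ?P (hh (W 0)) *v u1 + ?P (hh W') *v uvel ?P (W 0)"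
    using vel_deriv[OF hd qd inv'] unfolding uvel_def by blast
  obtain v1 where vd: "((\<lambda>s. vvel ?P (W s)) has_vector_derivative v1) (at 0)"
     and re: "qy W' = ?P (hh (W 0)) *v v1 + ?P (hh W') *v vvel ?P (W 0)"
    using vel_deriv[OF hd rd inv'] unfolding vvel_def by blast
  have q0: "qx (W 0) = ?P (hh (W 0)) *v uvel ?P (W 0)" unfolding uvel_def using minv_vec(1)[OF inv'] by simp
  have r0: "qy (W 0) = ?P (hh (W 0)) *v vvel ?P (W 0)" unfolding vvel_def using minv_vec(1)[OF inv'] by simp
  define E where "E = (qx W', ?P (qx (W 0)) *v u1 + ?P (qx W') *v uvel ?P (W 0)
       + (g/2) *\<^sub>R (?P (hh (W 0)) *v hh W' + ?P (hh W') *v hh (W 0)),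
      ?P (qx (W 0)) *v v1 + ?P (qx W') *v vvel ?P (W 0))"
  have fh: "(\<lambda>s. Fhat ?P g (W s)) = (\<lambda>s. (qx (W s), ?P (qx (W s)) *v uvel ?P (W s) + (g/2) *\<^sub>R (?P (hh (W s)) *v hh (W s)),
       ?P (qx (W s)) *v vvel ?P (W s)))"
    by (simp add: Fhat_def uvel_def vvel_def)
  have dE: "((\<lambda>s. Fhat ?P g (W s)) has_vector_derivative E) (at 0)"
    unfolding fh E_def
    by (intro Pair3_hvd has_vector_derivative_add Pop_mv_hvd scaleR_hvd qd ud vd hd)
  have dA: "((\<lambda>s. Fec ?P g (W 0) (W s) + (0, (g/2) *\<^sub>R (?P (avg (hh (W 0)) (hh (W s))) *v (Bw s - Bw 0)), 0))
       has_vector_derivative (1/2) *\<^sub>R (E + (0, g *\<^sub>R (?P (hh (W 0)) *v b1), 0))) (at 0)"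
    unfolding Fec_def Let_def
    apply (rule has_vector_derivative_eq_rhs)
     apply ((rule Pair3_hvd has_vector_derivative_add has_vector_derivative_diff Pop_mv_hvd scaleR_hvd avg_hvd
        qd ud vd hd Bd has_vector_derivative_const)+)[1]
    unfolding E_def q0 qe
    apply (simp add: avg_same avg_0 Pop_zero Pop_add Pop_scaleR matrix_vector_mult_add_rdistrib
       matrix_vector_right_distrib smat_mv matrix_vector_mult_scaleR Pop_comm[of \<rho> \<phi>] algebra_simps)
    apply (simp add: vec_eq_iff)
    done
  show ?thesis using dE dA by blast
qed

lemma dir_y:
  fixes W :: "real \<Rightarrow> 'k::finite st" and Bw :: "real \<Rightarrow> real^'k"
  assumes inv: "\<forall>s. invertible (Pop \<rho> \<phi> (hh (W s)))"
    and Wd: "(W has_vector_derivative W') (at 0)" and Bd: "(Bw has_vector_derivative b1) (at 0)"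
  shows "\<exists>E. ((\<lambda>s. Ghat (Pop \<rho> \<phi>) g (W s)) has_vector_derivative E) (at 0) \<and>
    ((\<lambda>s. Gec (Pop \<rho> \<phi>) g (W 0) (W s) + (0, 0, (g/2) *\<^sub>R (Pop \<rho> \<phi> (avg (hh (W 0)) (hh (W s))) *v (Bw s - Bw 0))))
       has_vector_derivative (1/2) *\<^sub>R (E + (0, 0, g *\<^sub>R (Pop \<rho> \<phi> (hh (W 0)) *v b1)))) (at 0)"
proof -
  let ?P = "Pop \<rho> \<phi>"
  have hd: "((\<lambda>s. hh (W s)) has_vector_derivative hh W') (at 0)" by (rule hh_hvd[OF Wd])
  have qd: "((\<lambda>s. qx (W s)) has_vector_derivative qx W') (at 0)" by (rule qx_hvd[OF Wd])
  have rd: "((\<lambda>s. qy (W s)) has_vector_derivative qy W') (at 0)" by (rule qy_hvd[OF Wd])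
  have inv': "\<And>s. invertible (?P (hh (W s)))" using inv by blast
  obtain u1 where ud: "((\<lambda>s. uvel ?P (W s)) has_vector_derivative u1) (at 0)"
     and qe: "qx W' = ?P (hh (W 0)) *v u1 + ?P (hh W') *v uvel ?P (W 0)"
    using vel_deriv[OF hd qd inv'] unfolding uvel_def by blast
  obtain v1 where vd: "((\<lambda>s. vvel ?P (W s)) has_vector_derivative v1) (at 0)"
     and re: "qy W' = ?P (hh (W 0)) *v v1 + ?P (hh W') *v vvel ?P (W 0)"
    using vel_deriv[OF hd rd inv'] unfolding vvel_def by blast
  have q0: "qx (W 0) = ?P (hh (W 0)) *v uvel ?P (W 0)" unfolding uvel_def using minv_vec(1)[OF inv'] by simp
  have r0: "qy (W 0) = ?P (hh (W 0)) *v vvel ?P (W 0)" unfolding vvel_def using minv_vec(1)[OF inv'] by simp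
  define E where "E = (qy W', ?P (qy (W 0)) *v u1 + ?P (qy W') *v uvel ?P (W 0),
      ?P (qy (W 0)) *v v1 + ?P (qy W') *v vvel ?P (W 0)
       + (g/2) *\<^sub>R (?P (hh (W 0)) *v hh W' + ?P (hh W') *v hh (W 0)))"
  have fh: "(\<lambda>s. Ghat ?P g (W s)) = (\<lambda>s. (qy (W s), ?P (qy (W s)) *v uvel ?P (W s),
       ?P (qy (W s)) *v vvel ?P (W s) + (g/2) *\<^sub>R (?P (hh (W s)) *v hh (W s))))"
    by (simp add: Ghat_def uvel_def vvel_def)
  have dE: "((\<lambda>s. Ghat ?P g (W s)) has_vector_derivative E) (at 0)"
    unfolding fh E_def
    by (intro Pair3_hvd has_vector_derivative_add Pop_mv_hvd scaleR_hvd rd ud vd hd)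
  have dA: "((\<lambda>s. Gec ?P g (W 0) (W s) + (0, 0, (g/2) *\<^sub>R (?P (avg (hh (W 0)) (hh (W s))) *v (Bw s - Bw 0))))
       has_vector_derivative (1/2) *\<^sub>R (E + (0, 0, g *\<^sub>R (?P (hh (W 0)) *v b1)))) (at 0)"
    unfolding Gec_def Let_def
    apply (rule has_vector_derivative_eq_rhs)
     apply ((rule Pair3_hvd has_vector_derivative_add has_vector_derivative_diff Pop_mv_hvd scaleR_hvd avg_hvd
        qd ud vd hd Bd has_vector_derivative_const)+)[1]
    unfolding E_def r0 re
    apply (simp add: avg_same avg_0 Pop_zero Pop_add Pop_scaleR matrix_vector_mult_add_rdistrib
       matrix_vector_right_distrib smat_mv matrix_vector_mult_scaleR Pop_comm[of \<rho> \<phi>] algebra_simps)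
    apply (simp add: vec_eq_iff)
    done
  show ?thesis using dE dA by blast
qed


lemma avg_sym: "avg a b = avg b a" by (simp add: avg_def add.commute)

lemma Fec_sym: "Fec P g L R = Fec P g R L"
  unfolding Fec_def Let_def by (simp add: avg_sym[of "hh L"] avg_sym[of "uvel P L"] avg_sym[of "vvel P L"] avg_sym[of "P (hh L) *v hh L"])
lemma Gec_sym: "Gec P g L R = Gec P g R L"
  unfolding Gec_def Let_def by (simp add: avg_sym[of "hh L"] avg_sym[of "uvel P L"] avg_sym[of "vvel P L"] avg_sym[of "P (hh L) *v hh L"])

lemma scheme_at00:
  fixes U :: "int \<Rightarrow> int \<Rightarrow> 'k::finite st"
  shows "scheme_rhs P g dx dy U B 0 0 =
    - ((1/dx) *\<^sub>R ((Fec P g (U 0 0) (U 1 0) + (0, (g/2) *\<^sub>R (P (avg (hh (U 0 0)) (hh (U 1 0))) *v (B 1 0 - B 0 0)), 0))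
                    - (Fec P g (U 0 0) (U (-1) 0) + (0, (g/2) *\<^sub>R (P (avg (hh (U 0 0)) (hh (U (-1) 0))) *v (B (-1) 0 - B 0 0)), 0))))
    - ((1/dy) *\<^sub>R ((Gec P g (U 0 0) (U 0 1) + (0, 0, (g/2) *\<^sub>R (P (avg (hh (U 0 0)) (hh (U 0 1))) *v (B 0 1 - B 0 0))))
                    - (Gec P g (U 0 0) (U 0 (-1)) + (0, 0, (g/2) *\<^sub>R (P (avg (hh (U 0 0)) (hh (U 0 (-1)))) *v (B 0 (-1) - B 0 0))))))"
proof -
  have m: "P m *v (a - b) = - (P m *v (b - a))" for m a b
    by (simp add: matrix_vector_mult_diff_distrib)
  show ?thesis
    unfolding scheme_rhs_def Ssrc_def
    apply (simp add: Fec_sym[of P g "U (-1) 0"] Gec_sym[of P g "U 0 (-1)"] avg_sym[of "hh (U (-1) 0)"]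
        avg_sym[of "hh (U 0 (-1))"])
    apply (simp add: m[of _ "B 0 0" "B (-1) 0"] m[of _ "B 0 0" "B 0 (-1)"] algebra_simps)
    done
qed


lemma shift_back:
  assumes "((\<lambda>s. G (x + s)) has_vector_derivative E) (at 0)"
  shows "(G has_vector_derivative E) (at x)"
proof -
  have "((\<lambda>t. (\<lambda>s. G (x + s)) (-x + t)) has_vector_derivative E) (at x)"
    by (rule shift_hvd) (use assms in simp)
  then show ?thesis by simp
qed

lemma part3_point:
  fixes \<rho> :: "real^'d \<Rightarrow> real" and \<phi> :: "'k::finite \<Rightarrow> real^'d \<Rightarrow> real"
    and Uh :: "real \<Rightarrow> real \<Rightarrow> 'k st" and Bh :: "real \<Rightarrow> real \<Rightarrow> real^'k"
  assumes sU: "smooth2 Uh" and sB: "smooth2 Bh" and pd: "\<forall>x y. pos_def (Pop \<rho> \<phi> (hh (Uh x y)))"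
  shows "\<exists>C \<delta>. \<delta> > 0 \<and>
           (\<forall>dx dy. 0 < dx \<longrightarrow> dx < \<delta> \<longrightarrow> 0 < dy \<longrightarrow> dy < \<delta> \<longrightarrow>
              norm (scheme_rhs (Pop \<rho> \<phi>) g dx dy
                      (\<lambda>i j. Uh (x + of_int i * dx) (y + of_int j * dy))
                      (\<lambda>i j. Bh (x + of_int i * dx) (y + of_int j * dy)) 0 0
                    - (- pdx (\<lambda>a b. Fhat (Pop \<rho> \<phi>) g (Uh a b)) x y
                       - pdy (\<lambda>a b. Ghat (Pop \<rho> \<phi>) g (Uh a b)) x y
                       + Shat (Pop \<rho> \<phi>) g (Uh x y) (pdx Bh x y) (pdy Bh x y)))
              \<le> C * (dx^2 + dy^2))"
proof -
  let ?P = "Pop \<rho> \<phi>"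
  obtain fU gU where dUx: "\<And>x y. ((\<lambda>s. Uh s y) has_vector_derivative fU x y) (at x)"
      and dUy: "\<And>x y. ((\<lambda>s. Uh x s) has_vector_derivative gU x y) (at y)"
    using sU by (cases rule: smooth2.cases) blast
  obtain fB gB where dBx: "\<And>x y. ((\<lambda>s. Bh s y) has_vector_derivative fB x y) (at x)"
      and dBy: "\<And>x y. ((\<lambda>s. Bh x s) has_vector_derivative gB x y) (at y)"
    using sB by (cases rule: smooth2.cases) blast
  define Wx where "Wx = (\<lambda>s. Uh (x + s) y)"
  define Wy where "Wy = (\<lambda>s. Uh x (y + s))"
  define Bx where "Bx = (\<lambda>s. Bh (x + s) y)"
  define By where "By = (\<lambda>s. Bh x (y + s))"
  have invx: "\<forall>s. invertible (?P (hh (Wx s)))" and invy: "\<forall>s. invertible (?P (hh (Wy s)))"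
    using pd posdef_invertible unfolding Wx_def Wy_def by blast+
  have cWx: "Ck 4 Wx" and cWy: "Ck 4 Wy" unfolding Wx_def Wy_def using smooth2_Ck[OF sU] by blast+
  have cBx: "Ck 4 Bx" and cBy: "Ck 4 By" unfolding Bx_def By_def using smooth2_Ck[OF sB] by blast+
  have dWx: "(Wx has_vector_derivative fU x y) (at 0)" unfolding Wx_def
    by (rule shift_hvd) (use dUx in simp)
  have dWy: "(Wy has_vector_derivative gU x y) (at 0)" unfolding Wy_def
    by (rule shift_hvd) (use dUy in simp)
  have dBx': "(Bx has_vector_derivative fB x y) (at 0)" unfolding Bx_def
    by (rule shift_hvd) (use dBx in simp)
  have dBy': "(By has_vector_derivative gB x y) (at 0)" unfolding By_def
    by (rule shift_hvd) (use dBy in simp)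
  obtain Ex where dEx: "((\<lambda>s. Fhat ?P g (Wx s)) has_vector_derivative Ex) (at 0)"
    and dAx: "((\<lambda>s. Fec ?P g (Wx 0) (Wx s) + (0, (g/2) *\<^sub>R (?P (avg (hh (Wx 0)) (hh (Wx s))) *v (Bx s - Bx 0)), 0))
       has_vector_derivative (1/2) *\<^sub>R (Ex + (0, g *\<^sub>R (?P (hh (Wx 0)) *v fB x y), 0))) (at 0)"
    using dir_x[OF invx dWx dBx'] by blast
  obtain Ey where dEy: "((\<lambda>s. Ghat ?P g (Wy s)) has_vector_derivative Ey) (at 0)"
    and dAy: "((\<lambda>s. Gec ?P g (Wy 0) (Wy s) + (0, 0, (g/2) *\<^sub>R (?P (avg (hh (Wy 0)) (hh (Wy s))) *v (By s - By 0))))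
       has_vector_derivative (1/2) *\<^sub>R (Ey + (0, 0, g *\<^sub>R (?P (hh (Wy 0)) *v gB x y)))) (at 0)"
    using dir_y[OF invy dWy dBy'] by blast
  define Ax where "Ax = (\<lambda>s. Fec ?P g (Wx 0) (Wx s) + (0, (g/2) *\<^sub>R (?P (avg (hh (Wx 0)) (hh (Wx s))) *v (Bx s - Bx 0)), 0))"
  define Ay where "Ay = (\<lambda>s. Gec ?P g (Wy 0) (Wy s) + (0, 0, (g/2) *\<^sub>R (?P (avg (hh (Wy 0)) (hh (Wy s))) *v (By s - By 0))))"
  have cAx: "Ck 4 Ax" unfolding Ax_def
    by (intro Ck_add Ck_Fec_Gec(1) Ck_Pair Ck_const Ck_scaleR Ck_Pop_mv Ck_avg Ck_hh Ck_diff cWx cBx invx)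
       (use invx in auto)
  have cAy: "Ck 4 Ay" unfolding Ay_def
    by (intro Ck_add Ck_Fec_Gec(2) Ck_Pair Ck_const Ck_scaleR Ck_Pop_mv Ck_avg Ck_hh Ck_diff cWy cBy invy)
       (use invy in auto)
  obtain Cx where Cx: "\<And>h. 0 < h \<Longrightarrow> h < 1 \<Longrightarrow>
      norm ((1/h) *\<^sub>R (Ax h - Ax (-h)) - 2 *\<^sub>R ((1/2) *\<^sub>R (Ex + (0, g *\<^sub>R (?P (hh (Wx 0)) *v fB x y), 0)))) \<le> Cx * h^2"
    using odd_taylor[OF cAx dAx[folded Ax_def]] by blast
  obtain Cy where Cy: "\<And>h. 0 < h \<Longrightarrow> h < 1 \<Longrightarrow>
      norm ((1/h) *\<^sub>R (Ay h - Ay (-h)) - 2 *\<^sub>R ((1/2) *\<^sub>R (Ey + (0, 0, g *\<^sub>R (?P (hh (Wy 0)) *v gB x y))))) \<le> Cy * h^2"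
    using odd_taylor[OF cAy dAy[folded Ay_def]] by blast
  have pFx: "pdx (\<lambda>a b. Fhat ?P g (Uh a b)) x y = Ex"
  proof -
    have "((\<lambda>s. Fhat ?P g (Uh s y)) has_vector_derivative Ex) (at x)"
      by (rule shift_back) (use dEx in \<open>simp add: Wx_def\<close>)
    then show ?thesis unfolding pdx_def by (rule vector_derivative_at)
  qed
  have pGy: "pdy (\<lambda>a b. Ghat ?P g (Uh a b)) x y = Ey"
  proof -
    have "((\<lambda>s. Ghat ?P g (Uh x s)) has_vector_derivative Ey) (at y)"
      by (rule shift_back) (use dEy in \<open>simp add: Wy_def\<close>)
    then show ?thesis unfolding pdy_def by (rule vector_derivative_at)
  qed
  have pBx: "pdx Bh x y = fB x y" unfolding pdx_def by (rule vector_derivative_at[OF dBx])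
  have pBy: "pdy Bh x y = gB x y" unfolding pdy_def by (rule vector_derivative_at[OF dBy])
  have h0x: "hh (Wx 0) = hh (Uh x y)" and h0y: "hh (Wy 0) = hh (Uh x y)" by (simp_all add: Wx_def Wy_def)
  have main: "norm (scheme_rhs ?P g dx dy (\<lambda>i j. Uh (x + of_int i * dx) (y + of_int j * dy))
                      (\<lambda>i j. Bh (x + of_int i * dx) (y + of_int j * dy)) 0 0
                    - (- pdx (\<lambda>a b. Fhat ?P g (Uh a b)) x y - pdy (\<lambda>a b. Ghat ?P g (Uh a b)) x y
                       + Shat ?P g (Uh x y) (pdx Bh x y) (pdy Bh x y))) \<le> (\<bar>Cx\<bar> + \<bar>Cy\<bar>) * (dx^2 + dy^2)"
    if d: "0 < dx" "dx < 1" "0 < dy" "dy < 1" for dx dy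
  proof -
    have S: "scheme_rhs ?P g dx dy (\<lambda>i j. Uh (x + of_int i * dx) (y + of_int j * dy))
                      (\<lambda>i j. Bh (x + of_int i * dx) (y + of_int j * dy)) 0 0
          = - ((1/dx) *\<^sub>R (Ax dx - Ax (-dx))) - ((1/dy) *\<^sub>R (Ay dy - Ay (-dy)))"
      unfolding scheme_at00 Ax_def Ay_def Wx_def Wy_def Bx_def By_def by simp
    have T: "- pdx (\<lambda>a b. Fhat ?P g (Uh a b)) x y - pdy (\<lambda>a b. Ghat ?P g (Uh a b)) x y
                       + Shat ?P g (Uh x y) (pdx Bh x y) (pdy Bh x y)
        = - (2 *\<^sub>R ((1/2) *\<^sub>R (Ex + (0, g *\<^sub>R (?P (hh (Wx 0)) *v fB x y), 0))))
          - (2 *\<^sub>R ((1/2) *\<^sub>R (Ey + (0, 0, g *\<^sub>R (?P (hh (Wy 0)) *v gB x y)))))"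
      unfolding pFx pGy pBx pBy h0x h0y Shat_def by (simp add: algebra_simps)
    have "norm (scheme_rhs ?P g dx dy (\<lambda>i j. Uh (x + of_int i * dx) (y + of_int j * dy))
                      (\<lambda>i j. Bh (x + of_int i * dx) (y + of_int j * dy)) 0 0
                    - (- pdx (\<lambda>a b. Fhat ?P g (Uh a b)) x y - pdy (\<lambda>a b. Ghat ?P g (Uh a b)) x y
                       + Shat ?P g (Uh x y) (pdx Bh x y) (pdy Bh x y)))
       = norm (- ((1/dx) *\<^sub>R (Ax dx - Ax (-dx)) - 2 *\<^sub>R ((1/2) *\<^sub>R (Ex + (0, g *\<^sub>R (?P (hh (Wx 0)) *v fB x y), 0))))
               - ((1/dy) *\<^sub>R (Ay dy - Ay (-dy)) - 2 *\<^sub>R ((1/2) *\<^sub>R (Ey + (0, 0, g *\<^sub>R (?P (hh (Wy 0)) *v gB x y))))))"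
      unfolding S T by (rule arg_cong[where f = norm]) (simp add: prod_eq_iff algebra_simps)
    also have "\<dots> \<le> Cx * dx^2 + Cy * dy^2"
      by (rule order_trans[OF norm_triangle_ineq4]) (use Cx[of dx] Cy[of dy] d in \<open>auto intro!: add_mono simp: norm_minus_commute\<close>)
    also have "\<dots> \<le> (\<bar>Cx\<bar> + \<bar>Cy\<bar>) * (dx^2 + dy^2)"
    proof -
      have a: "Cx * dx^2 \<le> \<bar>Cx\<bar> * dx^2" by (intro mult_right_mono) auto
      have b: "Cy * dy^2 \<le> \<bar>Cy\<bar> * dy^2" by (intro mult_right_mono) auto
      have c: "0 \<le> \<bar>Cx\<bar> * dy^2" "0 \<le> \<bar>Cy\<bar> * dx^2" by auto
      show ?thesis unfolding distrib_left distrib_right using a b c by linarith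
    qed
    finally show ?thesis .
  qed
  show ?thesis
    by (rule exI[of _ "\<bar>Cx\<bar> + \<bar>Cy\<bar>"], rule exI[of _ 1]) (use main in auto)
qed


theorem theorem4p1:
  fixes \<rho> :: "real^'d \<Rightarrow> real"
    and \<phi> :: "'k::finite \<Rightarrow> real^'d \<Rightarrow> real"
    and k1 :: 'k
    and g :: real
  assumes basis: "sg_basis \<rho> \<phi> k1"
    and g_pos: "g > 0"
  shows
    \<comment> \<open>well-balanced\<close>
    "(\<forall>dx dy. dx > 0 \<longrightarrow> dy > 0 \<longrightarrow>
        (\<forall>(U::int \<Rightarrow> int \<Rightarrow> 'k st) (B::int \<Rightarrow> int \<Rightarrow> real^'k) (C::real^'k).
           (\<forall>i j. pos_def (Pop \<rho> \<phi> (hh (U i j)))) \<longrightarrow>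
           (\<forall>i j. qx (U i j) = 0 \<and> qy (U i j) = 0 \<and> hh (U i j) + B i j = C) \<longrightarrow>
           (\<forall>i j. scheme_rhs (Pop \<rho> \<phi>) g dx dy U B i j = 0)))
     \<and>
     \<comment> \<open>energy conservative, with two-point numerical energy fluxes\<close>
     (\<forall>dx dy. dx > 0 \<longrightarrow> dy > 0 \<longrightarrow>
        (\<exists>(Hf::'k st \<Rightarrow> 'k st \<Rightarrow> real^'k \<Rightarrow> real^'k \<Rightarrow> real)
           (Kf::'k st \<Rightarrow> 'k st \<Rightarrow> real^'k \<Rightarrow> real^'k \<Rightarrow> real).
          \<forall>(U::real \<Rightarrow> int \<Rightarrow> int \<Rightarrow> 'k st) (B::int \<Rightarrow> int \<Rightarrow> real^'k).
            (\<forall>t i j. pos_def (Pop \<rho> \<phi> (hh (U t i j)))) \<longrightarrow>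
            (\<forall>t i j. ((\<lambda>s. U s i j) has_vector_derivative
                        scheme_rhs (Pop \<rho> \<phi>) g dx dy (U t) B i j) (at t)) \<longrightarrow>
            (\<forall>t i j. ((\<lambda>s. energy (Pop \<rho> \<phi>) g (U s i j) (B i j)) has_real_derivative
                 (- (Hf (U t i j) (U t (i+1) j) (B i j) (B (i+1) j)
                     - Hf (U t (i-1) j) (U t i j) (B (i-1) j) (B i j)) / dx
                  - (Kf (U t i j) (U t i (j+1)) (B i j) (B i (j+1))
                     - Kf (U t i (j-1)) (U t i j) (B i (j-1)) (B i j)) / dy)) (at t))))
     \<and>
     \<comment> \<open>local truncation error O(dx^2 + dy^2)\<close>
     (\<forall>(Uh::real \<Rightarrow> real \<Rightarrow> 'k st) (Bh::real \<Rightarrow> real \<Rightarrow> real^'k).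
        smooth2 Uh \<longrightarrow> smooth2 Bh \<longrightarrow> (\<forall>x y. pos_def (Pop \<rho> \<phi> (hh (Uh x y)))) \<longrightarrow>
        (\<forall>x y. \<exists>C \<delta>. \<delta> > 0 \<and>
           (\<forall>dx dy. 0 < dx \<longrightarrow> dx < \<delta> \<longrightarrow> 0 < dy \<longrightarrow> dy < \<delta> \<longrightarrow>
              norm (scheme_rhs (Pop \<rho> \<phi>) g dx dy
                      (\<lambda>i j. Uh (x + of_int i * dx) (y + of_int j * dy))
                      (\<lambda>i j. Bh (x + of_int i * dx) (y + of_int j * dy)) 0 0
                    - (- pdx (\<lambda>a b. Fhat (Pop \<rho> \<phi>) g (Uh a b)) x y
                       - pdy (\<lambda>a b. Ghat (Pop \<rho> \<phi>) g (Uh a b)) x y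
                       + Shat (Pop \<rho> \<phi>) g (Uh x y) (pdx Bh x y) (pdy Bh x y)))
              \<le> C * (dx^2 + dy^2))))"
proof (intro conjI)
  show "\<forall>dx dy. dx > 0 \<longrightarrow> dy > 0 \<longrightarrow>
        (\<forall>(U::int \<Rightarrow> int \<Rightarrow> 'k st) (B::int \<Rightarrow> int \<Rightarrow> real^'k) (C::real^'k).
           (\<forall>i j. pos_def (Pop \<rho> \<phi> (hh (U i j)))) \<longrightarrow>
           (\<forall>i j. qx (U i j) = 0 \<and> qy (U i j) = 0 \<and> hh (U i j) + B i j = C) \<longrightarrow>
           (\<forall>i j. scheme_rhs (Pop \<rho> \<phi>) g dx dy U B i j = 0))"
    using wb by (metis less_numeral_extra(3))
next
  show "\<forall>dx dy. dx > 0 \<longrightarrow> dy > 0 \<longrightarrow>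
        (\<exists>(Hf::'k st \<Rightarrow> 'k st \<Rightarrow> real^'k \<Rightarrow> real^'k \<Rightarrow> real)
           (Kf::'k st \<Rightarrow> 'k st \<Rightarrow> real^'k \<Rightarrow> real^'k \<Rightarrow> real).
          \<forall>(U::real \<Rightarrow> int \<Rightarrow> int \<Rightarrow> 'k st) (B::int \<Rightarrow> int \<Rightarrow> real^'k).
            (\<forall>t i j. pos_def (Pop \<rho> \<phi> (hh (U t i j)))) \<longrightarrow>
            (\<forall>t i j. ((\<lambda>s. U s i j) has_vector_derivative
                        scheme_rhs (Pop \<rho> \<phi>) g dx dy (U t) B i j) (at t)) \<longrightarrow>
            (\<forall>t i j. ((\<lambda>s. energy (Pop \<rho> \<phi>) g (U s i j) (B i j)) has_real_derivative
                 (- (Hf (U t i j) (U t (i+1) j) (B i j) (B (i+1) j)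
                     - Hf (U t (i-1) j) (U t i j) (B (i-1) j) (B i j)) / dx
                  - (Kf (U t i j) (U t i (j+1)) (B i j) (B i (j+1))
                     - Kf (U t i (j-1)) (U t i j) (B i (j-1)) (B i j)) / dy)) (at t)))"
  proof (intro allI impI)
    fix dx dy :: real
    assume dx: "dx > 0" and dy: "dy > 0"
    show "\<exists>(Hf::'k st \<Rightarrow> 'k st \<Rightarrow> real^'k \<Rightarrow> real^'k \<Rightarrow> real)
           (Kf::'k st \<Rightarrow> 'k st \<Rightarrow> real^'k \<Rightarrow> real^'k \<Rightarrow> real).
          \<forall>(U::real \<Rightarrow> int \<Rightarrow> int \<Rightarrow> 'k st) (B::int \<Rightarrow> int \<Rightarrow> real^'k).
            (\<forall>t i j. pos_def (Pop \<rho> \<phi> (hh (U t i j)))) \<longrightarrow>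
            (\<forall>t i j. ((\<lambda>s. U s i j) has_vector_derivative
                        scheme_rhs (Pop \<rho> \<phi>) g dx dy (U t) B i j) (at t)) \<longrightarrow>
            (\<forall>t i j. ((\<lambda>s. energy (Pop \<rho> \<phi>) g (U s i j) (B i j)) has_real_derivative
                 (- (Hf (U t i j) (U t (i+1) j) (B i j) (B (i+1) j)
                     - Hf (U t (i-1) j) (U t i j) (B (i-1) j) (B i j)) / dx
                  - (Kf (U t i j) (U t i (j+1)) (B i j) (B i (j+1))
                     - Kf (U t i (j-1)) (U t i j) (B i (j-1)) (B i j)) / dy)) (at t))"
    proof (intro exI allI impI)
      fix U :: "real \<Rightarrow> int \<Rightarrow> int \<Rightarrow> 'k st" and B :: "int \<Rightarrow> int \<Rightarrow> real^'k" and t i j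
      assume pd: "\<forall>t i j. pos_def (Pop \<rho> \<phi> (hh (U t i j)))"
        and hv: "\<forall>t i j. ((\<lambda>s. U s i j) has_vector_derivative
                        scheme_rhs (Pop \<rho> \<phi>) g dx dy (U t) B i j) (at t)"
      have "((\<lambda>s. energy (Pop \<rho> \<phi>) g (U s i j) (B i j)) has_real_derivative
            dotst (Vf (Pop \<rho> \<phi>) g (U t i j) (B i j)) (scheme_rhs (Pop \<rho> \<phi>) g dx dy (U t) B i j)) (at t)"
        by (rule energy_deriv) (use pd hv in auto)
      then show "((\<lambda>s. energy (Pop \<rho> \<phi>) g (U s i j) (B i j)) has_real_derivative
                 (- (Hf \<rho> \<phi> g (U t i j) (U t (i+1) j) (B i j) (B (i+1) j)
                     - Hf \<rho> \<phi> g (U t (i-1) j) (U t i j) (B (i-1) j) (B i j)) / dx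
                  - (Kf \<rho> \<phi> g (U t i j) (U t i (j+1)) (B i j) (B i (j+1))
                     - Kf \<rho> \<phi> g (U t i (j-1)) (U t i j) (B i (j-1)) (B i j)) / dy)) (at t)"
        using EI[where dx=dx and dy=dy and U="U t" and B=B and i=i and j=j and \<rho>=\<rho> and \<phi>=\<phi> and g=g] dx dy by simp
    qed
  qed
next
  show "\<forall>(Uh::real \<Rightarrow> real \<Rightarrow> 'k st) (Bh::real \<Rightarrow> real \<Rightarrow> real^'k).
        smooth2 Uh \<longrightarrow> smooth2 Bh \<longrightarrow> (\<forall>x y. pos_def (Pop \<rho> \<phi> (hh (Uh x y)))) \<longrightarrow>
        (\<forall>x y. \<exists>C \<delta>. \<delta> > 0 \<and>
           (\<forall>dx dy. 0 < dx \<longrightarrow> dx < \<delta> \<longrightarrow> 0 < dy \<longrightarrow> dy < \<delta> \<longrightarrow>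
              norm (scheme_rhs (Pop \<rho> \<phi>) g dx dy
                      (\<lambda>i j. Uh (x + of_int i * dx) (y + of_int j * dy))
                      (\<lambda>i j. Bh (x + of_int i * dx) (y + of_int j * dy)) 0 0
                    - (- pdx (\<lambda>a b. Fhat (Pop \<rho> \<phi>) g (Uh a b)) x y
                       - pdy (\<lambda>a b. Ghat (Pop \<rho> \<phi>) g (Uh a b)) x y
                       + Shat (Pop \<rho> \<phi>) g (Uh x y) (pdx Bh x y) (pdy Bh x y)))
              \<le> C * (dx^2 + dy^2)))"
    using part3_point by blast
qed

end
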